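(* Let $k$ be a field, $\Gamma=(V,E)$ a finite connected quiver, and $I\subseteq R^2$ a two-sided ideal of $k\Gamma$ such that $k\Gamma/I$ is acyclic. Then $\dim_k H^1(k\Gamma,k\Gamma/I)=|\mathfrak{B}_2|+1-|V|$.
   Context: For a path $p$, $t(p),h(p)$ are its start and end vertex; paths multiply by left-to-right concatenation (product $0$ if they do not concatenate). $R$ is the ideal generated by $E$, $\overline{x}=x+I$. A differential operator from $k\Gamma$ to $k\Gamma/I$ is a $k$-linear map with $D(xy)=D(x)\overline{y}+\overline{x}D(y)$; $H^1(k\Gamma,k\Gamma/I)$ is the space of differential operators modulo the inner ones $x\mapsto m\overline{x}-\overline{x}m$ ($m\in k\Gamma/I$). $\mathscr{Q}$ is a fixed $k$-basis of $k\Gamma/I$ consisting of residue classes of paths and containing the classes of all vertices and arrows; $t(\overline{s}),h(\overline{s})$ for $\overline{s}\in\mathscr{Q}$ are the start/end vertex of any representing path (well defined). $k\Gamma/I$ is called acyclic if every $\overline{q}\in\mathscr{Q}$ with $t(\overline{q})=h(\overline{q})$ is the class of a vertex (this does not depend on the choice of $\mathscr{Q}$). $\mathfrak{B}_2=\{D_{r,\overline{s}}\mid r\in E,\ \overline{s}\in\mathscr{Q},\ t(r)=t(\overline{s}),\ h(r)=h(\overline{s})\}$, where $D_{r,\overline{s}}$ is the unique differential operator $k\Gamma\to k\Gamma/I$ with $D_{r,\overline{s}}(r)=\overline{s}$ and vanishing on all other arrows and vertices. *)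

theory Defs
  imports Main
begin

text \<open>A quiver is given by a vertex set V, an arrow set E and maps
  src (= t, start vertex) and tgt (= h, end vertex).  A path is a pair
  (v, as) of its start vertex v and its list of arrows (read left to right);
  (v, []) is the trivial path at v.\<close>

type_synonym ('v,'e) qpath = "'v \<times> 'e list"

fun pvalid_aux :: "'v set \<Rightarrow> 'e set \<Rightarrow> ('e \<Rightarrow> 'v) \<Rightarrow> ('e \<Rightarrow> 'v) \<Rightarrow> 'v \<Rightarrow> 'e list \<Rightarrow> bool" where
  "pvalid_aux V E src tgt v [] = (v \<in> V)"
| "pvalid_aux V E src tgt v (a # as) =
     (v \<in> V \<and> a \<in> E \<and> src a = v \<and> pvalid_aux V E src tgt (tgt a) as)"

definition pvalid :: "'v set \<Rightarrow> 'e set \<Rightarrow> ('e \<Rightarrow> 'v) \<Rightarrow> ('e \<Rightarrow> 'v) \<Rightarrow> ('v,'e) qpath \<Rightarrow> bool" where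
  "pvalid V E src tgt p = pvalid_aux V E src tgt (fst p) (snd p)"

fun pend_aux :: "('e \<Rightarrow> 'v) \<Rightarrow> 'v \<Rightarrow> 'e list \<Rightarrow> 'v" where
  "pend_aux tgt v [] = v"
| "pend_aux tgt v (a # as) = pend_aux tgt (tgt a) as"

definition pstart :: "('v,'e) qpath \<Rightarrow> 'v" where "pstart p = fst p"

definition pend :: "('e \<Rightarrow> 'v) \<Rightarrow> ('v,'e) qpath \<Rightarrow> 'v" where
  "pend tgt p = pend_aux tgt (fst p) (snd p)"

definition pathalg :: "'v set \<Rightarrow> 'e set \<Rightarrow> ('e \<Rightarrow> 'v) \<Rightarrow> ('e \<Rightarrow> 'v) \<Rightarrow> (('v,'e) qpath \<Rightarrow> 'k::field) set" where
  "pathalg V E src tgt = {x. finite {p. x p \<noteq> 0} \<and> (\<forall>p. x p \<noteq> 0 \<longrightarrow> pvalid V E src tgt p)}"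

text \<open>Multiplication: bilinear extension of left-to-right concatenation of paths
  (product 0 if paths do not concatenate).\<close>

definition pmult :: "('e \<Rightarrow> 'v) \<Rightarrow> (('v,'e) qpath \<Rightarrow> 'k::field) \<Rightarrow> (('v,'e) qpath \<Rightarrow> 'k) \<Rightarrow> (('v,'e) qpath \<Rightarrow> 'k)" where
  "pmult tgt x y = (\<lambda>(v, zs). \<Sum>i\<in>{0..length zs}.
      x (v, take i zs) * y (pend_aux tgt v (take i zs), drop i zs))"

definition delta :: "('v,'e) qpath \<Rightarrow> (('v,'e) qpath \<Rightarrow> 'k::field)" where
  "delta p = (\<lambda>q. if q = p then 1 else 0)"

definition vtx :: "'v \<Rightarrow> (('v,'e) qpath \<Rightarrow> 'k::field)" where
  "vtx v = delta (v, [])"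

definition arr :: "('e \<Rightarrow> 'v) \<Rightarrow> 'e \<Rightarrow> (('v,'e) qpath \<Rightarrow> 'k::field)" where
  "arr src a = delta (src a, [a])"

definition is_ideal :: "'v set \<Rightarrow> 'e set \<Rightarrow> ('e \<Rightarrow> 'v) \<Rightarrow> ('e \<Rightarrow> 'v) \<Rightarrow> (('v,'e) qpath \<Rightarrow> 'k::field) set \<Rightarrow> bool" where
  "is_ideal V E src tgt J \<longleftrightarrow>
     J \<subseteq> pathalg V E src tgt \<and> (\<lambda>_. 0) \<in> J \<and>
     (\<forall>x\<in>J. \<forall>y\<in>J. (\<lambda>p. x p + y p) \<in> J) \<and>
     (\<forall>c. \<forall>x\<in>J. (\<lambda>p. c * x p) \<in> J) \<and>
     (\<forall>a\<in>pathalg V E src tgt. \<forall>x\<in>J. pmult tgt a x \<in> J \<and> pmult tgt x a \<in> J)"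

definition ideal_gen :: "'v set \<Rightarrow> 'e set \<Rightarrow> ('e \<Rightarrow> 'v) \<Rightarrow> ('e \<Rightarrow> 'v) \<Rightarrow> (('v,'e) qpath \<Rightarrow> 'k::field) set \<Rightarrow> (('v,'e) qpath \<Rightarrow> 'k) set" where
  "ideal_gen V E src tgt S = \<Inter>{J. is_ideal V E src tgt J \<and> S \<subseteq> J}"

definition arrow_ideal :: "'v set \<Rightarrow> 'e set \<Rightarrow> ('e \<Rightarrow> 'v) \<Rightarrow> ('e \<Rightarrow> 'v) \<Rightarrow> (('v,'e) qpath \<Rightarrow> 'k::field) set" where
  "arrow_ideal V E src tgt = ideal_gen V E src tgt (arr src ` E)"

definition arrow_ideal_sq :: "'v set \<Rightarrow> 'e set \<Rightarrow> ('e \<Rightarrow> 'v) \<Rightarrow> ('e \<Rightarrow> 'v) \<Rightarrow> (('v,'e) qpath \<Rightarrow> 'k::field) set" where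
  "arrow_ideal_sq V E src tgt = ideal_gen V E src tgt
     {pmult tgt r s | r s. r \<in> arrow_ideal V E src tgt \<and> s \<in> arrow_ideal V E src tgt}"

text \<open>Differential operators k\<Gamma> \<rightarrow> k\<Gamma>/I, represented by maps D choosing a
  representative in k\<Gamma> of each value (equalities in k\<Gamma>/I become membership of
  differences in I); D is extensional (0 outside k\<Gamma>).\<close>

definition is_diff_op :: "'v set \<Rightarrow> 'e set \<Rightarrow> ('e \<Rightarrow> 'v) \<Rightarrow> ('e \<Rightarrow> 'v) \<Rightarrow> (('v,'e) qpath \<Rightarrow> 'k::field) set
     \<Rightarrow> ((('v,'e) qpath \<Rightarrow> 'k) \<Rightarrow> (('v,'e) qpath \<Rightarrow> 'k)) \<Rightarrow> bool" where
  "is_diff_op V E src tgt I D \<longleftrightarrow>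
     (\<forall>x. x \<notin> pathalg V E src tgt \<longrightarrow> D x = (\<lambda>_. 0)) \<and>
     (\<forall>x\<in>pathalg V E src tgt. D x \<in> pathalg V E src tgt) \<and>
     (\<forall>x\<in>pathalg V E src tgt. \<forall>y\<in>pathalg V E src tgt. \<forall>a b.
        (\<lambda>p. D (\<lambda>q. a * x q + b * y q) p - (a * D x p + b * D y p)) \<in> I) \<and>
     (\<forall>x\<in>pathalg V E src tgt. \<forall>y\<in>pathalg V E src tgt.
        (\<lambda>p. D (pmult tgt x y) p - (pmult tgt (D x) y p + pmult tgt x (D y) p)) \<in> I)"

definition is_inner_op :: "'v set \<Rightarrow> 'e set \<Rightarrow> ('e \<Rightarrow> 'v) \<Rightarrow> ('e \<Rightarrow> 'v) \<Rightarrow> (('v,'e) qpath \<Rightarrow> 'k::field) set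
     \<Rightarrow> ((('v,'e) qpath \<Rightarrow> 'k) \<Rightarrow> (('v,'e) qpath \<Rightarrow> 'k)) \<Rightarrow> bool" where
  "is_inner_op V E src tgt I D \<longleftrightarrow> is_diff_op V E src tgt I D \<and>
     (\<exists>m\<in>pathalg V E src tgt. \<forall>x\<in>pathalg V E src tgt.
        (\<lambda>p. D x p - (pmult tgt m x p - pmult tgt x m p)) \<in> I)"

definition lincomb :: "('f \<Rightarrow> 'k::field) \<Rightarrow> 'f set \<Rightarrow> ('f \<Rightarrow> 'x \<Rightarrow> 'y \<Rightarrow> 'k) \<Rightarrow> ('x \<Rightarrow> 'y \<Rightarrow> 'k)" where
  "lincomb c S ev = (\<lambda>x p. \<Sum>D\<in>S. c D * ev D x p)"

definition quot_dim :: "(('x \<Rightarrow> 'y \<Rightarrow> 'k::field)) set \<Rightarrow> ('x \<Rightarrow> 'y \<Rightarrow> 'k) set \<Rightarrow> nat \<Rightarrow> bool" where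
  "quot_dim A B n \<longleftrightarrow> (\<exists>S. finite S \<and> card S = n \<and> S \<subseteq> A \<and>
     (\<forall>c. lincomb c S id \<in> B \<longrightarrow> (\<forall>D\<in>S. c D = 0)) \<and>
     (\<forall>D\<in>A. \<exists>c. (\<lambda>x p. D x p - lincomb c S id x p) \<in> B))"

definition H1_dim :: "'v set \<Rightarrow> 'e set \<Rightarrow> ('e \<Rightarrow> 'v) \<Rightarrow> ('e \<Rightarrow> 'v) \<Rightarrow> (('v,'e) qpath \<Rightarrow> 'k::field) set \<Rightarrow> nat \<Rightarrow> bool" where
  "H1_dim V E src tgt I n \<longleftrightarrow>
     quot_dim {D. is_diff_op V E src tgt I D} {D. is_inner_op V E src tgt I D} n"

definition path_basis_mod :: "'v set \<Rightarrow> 'e set \<Rightarrow> ('e \<Rightarrow> 'v) \<Rightarrow> ('e \<Rightarrow> 'v) \<Rightarrow> (('v,'e) qpath \<Rightarrow> 'k::field) set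
     \<Rightarrow> ('v,'e) qpath set \<Rightarrow> bool" where
  "path_basis_mod V E src tgt I Q \<longleftrightarrow>
     (\<forall>q\<in>Q. pvalid V E src tgt q) \<and>
     (\<forall>F c. finite F \<and> F \<subseteq> Q \<and> (\<lambda>p. \<Sum>q\<in>F. c q * (delta q p :: 'k)) \<in> I \<longrightarrow> (\<forall>q\<in>F. c q = 0)) \<and>
     (\<forall>x\<in>pathalg V E src tgt. \<exists>F c. finite F \<and> F \<subseteq> Q \<and>
        (\<lambda>p. x p - (\<Sum>q\<in>F. c q * delta q p)) \<in> I)"

definition quiver_connected :: "'v set \<Rightarrow> 'e set \<Rightarrow> ('e \<Rightarrow> 'v) \<Rightarrow> ('e \<Rightarrow> 'v) \<Rightarrow> bool" where
  "quiver_connected V E src tgt \<longleftrightarrow> V \<noteq> {} \<and>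
     (\<forall>u\<in>V. \<forall>v\<in>V. (u, v) \<in> (\<Union>a\<in>E. {(src a, tgt a), (tgt a, src a)})\<^sup>*)"

definition B2 :: "'e set \<Rightarrow> ('e \<Rightarrow> 'v) \<Rightarrow> ('e \<Rightarrow> 'v) \<Rightarrow> ('v,'e) qpath set \<Rightarrow> ('e \<times> ('v,'e) qpath) set" where
  "B2 E src tgt Q = {(r, q). r \<in> E \<and> q \<in> Q \<and> src r = pstart q \<and> tgt r = pend tgt q}"

end

theory Submission
  imports Defs
begin

lemma pend_aux_append: "pend_aux tgt v (as @ bs) = pend_aux tgt (pend_aux tgt v as) bs"
  by (induction as arbitrary: v) auto

lemma pvalid_aux_start: "pvalid_aux V E src tgt v as \<Longrightarrow> v \<in> V"
  by (cases as) auto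

lemma pvalid_aux_append:
  "pvalid_aux V E src tgt v (as @ bs) \<longleftrightarrow>
     pvalid_aux V E src tgt v as \<and> pvalid_aux V E src tgt (pend_aux tgt v as) bs"
  by (induction as arbitrary: v) (auto dest: pvalid_aux_start)

lemma pvalid_aux_end: "pvalid_aux V E src tgt v as \<Longrightarrow> pend_aux tgt v as \<in> V"
  by (induction as arbitrary: v) auto

lemma pvalid_aux_set: "pvalid_aux V E src tgt v as \<Longrightarrow> set as \<subseteq> E"
  by (induction as arbitrary: v) auto

lemma pmult_delta_pt:
  fixes tgt :: "'e \<Rightarrow> 'v"
  shows "pmult tgt (delta (v, as)) (delta (w, bs)) (u, zs) =
     (if pend_aux tgt v as = w then delta (v, as @ bs) (u, zs) else (0::'k::field))"
proof -
  let ?t = "\<lambda>i. (if (u, take i zs) = (v, as) then 1 else 0) *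
        (if (pend_aux tgt u (take i zs), drop i zs) = (w, bs) then 1 else (0::'k))"
  have "pmult tgt (delta (v, as)) (delta (w, bs)) (u, zs) = (\<Sum>i\<in>{0..length zs}. ?t i)"
    unfolding pmult_def delta_def by simp
  also have "\<dots> = (\<Sum>i\<in>{0..length zs}. if i = length as then ?t (length as) else 0)"
    by (rule sum.cong) auto
  also have "\<dots> = (if pend_aux tgt v as = w then delta (v, as @ bs) (u, zs) else 0)"
    apply (auto simp: delta_def)
    apply (metis append_take_drop_id)+
    done
  finally show ?thesis .
qed

lemma pmult_delta:
  fixes tgt :: "'e \<Rightarrow> 'v"
  shows "pmult tgt (delta (v, as)) (delta (w, bs)) =
     (if pend_aux tgt v as = w then delta (v, as @ bs) else (\<lambda>_. 0::'k::field))"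
  by (rule ext, case_tac x, simp add: pmult_delta_pt)

lemma sum_delta_fun:
  assumes "finite F"
  shows "(\<Sum>q\<in>F. c q * (delta q p :: 'k::field)) = (if p \<in> F then c p else 0)"
proof -
  have "(\<Sum>q\<in>F. c q * (delta q p :: 'k)) = (\<Sum>q\<in>F. if q = p then c q else 0)"
    by (rule sum.cong) (auto simp: delta_def)
  then show ?thesis using assms by (simp add: sum.delta')
qed

lemma pathalg_expand:
  assumes "x \<in> pathalg V E src tgt"
  shows "(\<lambda>p. \<Sum>q\<in>{q. x q \<noteq> 0}. x q * delta q p) = x"
proof -
  have f: "finite {q. x q \<noteq> 0}" using assms by (simp add: pathalg_def)
  show ?thesis by (rule ext) (simp add: sum_delta_fun[OF f])
qed

lemma pmult_sum_left:
  "pmult tgt (\<lambda>p. \<Sum>i\<in>F. c i * f i p) y = (\<lambda>p. \<Sum>i\<in>F. c i * pmult tgt (f i) y p)"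
  apply (rule ext)
  apply (auto simp: pmult_def sum_distrib_right sum_distrib_left mult.assoc)
  apply (rule sum.swap)
  done

lemma pmult_sum_right:
  "pmult tgt y (\<lambda>p. \<Sum>i\<in>F. c i * f i p) = (\<lambda>p. \<Sum>i\<in>F. c i * pmult tgt y (f i) p)"
  apply (rule ext)
  apply (auto simp: pmult_def sum_distrib_right sum_distrib_left mult.assoc mult.left_commute)
  apply (rule sum.swap)
  done

lemma pmult_lin_left:
  "pmult tgt (\<lambda>p. a * x p + b * y p) z = (\<lambda>p. a * pmult tgt x z p + b * pmult tgt y z p)"
  by (rule ext) (auto simp: pmult_def sum_distrib_left sum.distrib algebra_simps)

lemma pmult_lin_right:
  "pmult tgt z (\<lambda>p. a * x p + b * y p) = (\<lambda>p. a * pmult tgt z x p + b * pmult tgt z y p)"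
  by (rule ext) (auto simp: pmult_def sum_distrib_left sum.distrib algebra_simps)

lemma pmult_diff_left:
  "pmult tgt (\<lambda>p. x p - y p) z = (\<lambda>p. pmult tgt x z p - pmult tgt y z p)"
  by (rule ext) (auto simp: pmult_def sum_subtractf algebra_simps)

lemma pmult_diff_right:
  "pmult tgt z (\<lambda>p. x p - y p) = (\<lambda>p. pmult tgt z x p - pmult tgt z y p)"
  by (rule ext) (auto simp: pmult_def sum_subtractf algebra_simps)

lemma pmult_add_left:
  "pmult tgt (\<lambda>p. x p + y p) z = (\<lambda>p. pmult tgt x z p + pmult tgt y z p)"
  by (rule ext) (auto simp: pmult_def sum.distrib algebra_simps)

lemma pmult_add_right:
  "pmult tgt z (\<lambda>p. x p + y p) = (\<lambda>p. pmult tgt z x p + pmult tgt z y p)"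
  by (rule ext) (auto simp: pmult_def sum.distrib algebra_simps)

lemma pmult_smult_left:
  "pmult tgt (\<lambda>p. a * x p) z = (\<lambda>p. a * pmult tgt x z p)"
  by (rule ext) (auto simp: pmult_def sum_distrib_left algebra_simps)

lemma pmult_smult_right:
  "pmult tgt z (\<lambda>p. a * x p) = (\<lambda>p. a * pmult tgt z x p)"
  by (rule ext) (auto simp: pmult_def sum_distrib_left algebra_simps)

lemma pmult_zero_left: "pmult tgt (\<lambda>_. 0) z = (\<lambda>_. 0)"
  by (rule ext) (auto simp: pmult_def)

lemma pmult_zero_right: "pmult tgt z (\<lambda>_. 0) = (\<lambda>_. 0)"
  by (rule ext) (auto simp: pmult_def)

lemma pmult_vtxlike_left:
  assumes "\<forall>p. snd p \<noteq> [] \<longrightarrow> g p = 0"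
  shows "pmult tgt g y (u, zs) = g (u, []) * y (u, zs)"
proof -
  have "pmult tgt g y (u, zs) = (\<Sum>i\<in>{0..length zs}.
     if i = 0 then g (u, []) * y (u, zs) else 0)"
    unfolding pmult_def prod.case
  proof (rule sum.cong)
    fix i assume i: "i \<in> {0..length zs}"
    show "g (u, take i zs) * y (pend_aux tgt u (take i zs), drop i zs) =
      (if i = 0 then g (u, []) * y (u, zs) else 0)"
    proof (cases "i = 0")
      case False
      then have "take i zs \<noteq> []" using i by auto
      then show ?thesis using assms False by auto
    qed simp
  qed simp
  then show ?thesis by simp
qed

lemma pmult_vtxlike_right:
  assumes "\<forall>p. snd p \<noteq> [] \<longrightarrow> g p = 0"
  shows "pmult tgt y g (u, zs) = y (u, zs) * g (pend_aux tgt u zs, [])"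
proof -
  have "pmult tgt y g (u, zs) = (\<Sum>i\<in>{0..length zs}.
     if i = length zs then y (u, zs) * g (pend_aux tgt u zs, []) else 0)"
    unfolding pmult_def prod.case
  proof (rule sum.cong)
    fix i assume i: "i \<in> {0..length zs}"
    show "y (u, take i zs) * g (pend_aux tgt u (take i zs), drop i zs) =
      (if i = length zs then y (u, zs) * g (pend_aux tgt u zs, []) else 0)"
    proof (cases "i = length zs")
      case False
      then have "drop i zs \<noteq> []" using i by auto
      then show ?thesis using assms False by auto
    qed simp
  qed simp
  then show ?thesis by simp
qed

lemma vtx_vtxlike: "\<forall>p. snd p \<noteq> [] \<longrightarrow> delta (w, []) p = 0"
  by (auto simp: delta_def)

lemma pmult_vtx_left: "pmult tgt (delta (w, [])) y (u, zs) = (if u = w then y (u, zs) else 0)"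
  by (subst pmult_vtxlike_left[OF vtx_vtxlike]) (simp add: delta_def)

lemma pmult_vtx_right:
  "pmult tgt y (delta (w, [])) (u, zs) = (if pend_aux tgt u zs = w then y (u, zs) else 0)"
  by (subst pmult_vtxlike_right[OF vtx_vtxlike]) (simp add: delta_def)

lemma pmult_assoc_pt:
  "pmult tgt x (pmult tgt y z) (v, zs) = pmult tgt (pmult tgt x y) z (v, zs)"
proof -
  let ?n = "length zs"
  define G where "G i j = x (v, take i zs) * y (pend_aux tgt v (take i zs), take j (drop i zs)) *
      z (pend_aux tgt v (take (i + j) zs), drop (i + j) zs)" for i j
  have 1: "pmult tgt x (pmult tgt y z) (v, zs) = (\<Sum>i\<in>{..?n}. \<Sum>j\<in>{..?n - i}. G i j)"
    unfolding pmult_def G_def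
    by (simp add: atLeast0AtMost sum_distrib_left mult.assoc take_add pend_aux_append add.commute)
  have 2: "(\<Sum>i\<in>{..?n}. \<Sum>j\<in>{..?n - i}. G i j) = (\<Sum>(i,j)\<in>{(i,j). i + j \<le> ?n}. G i j)"
  proof -
    have "(\<Sum>i\<in>{..?n}. \<Sum>j\<in>{..?n - i}. G i j) = (\<Sum>(i,j)\<in>Sigma {..?n} (\<lambda>i. {..?n - i}). G i j)"
      by (rule sum.Sigma) auto
    also have "Sigma {..?n} (\<lambda>i. {..?n - i}) = {(i,j). i + j \<le> ?n}" by auto
    finally show ?thesis .
  qed
  have 3: "(\<Sum>(i,j)\<in>{(i,j). i + j \<le> ?n}. G i j) = (\<Sum>k\<in>{..?n}. \<Sum>i\<in>{..k}. G i (k - i))"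
    by (rule sum.triangle_reindex_eq)
  have 4: "pmult tgt (pmult tgt x y) z (v, zs) = (\<Sum>k\<in>{..?n}. \<Sum>i\<in>{..k}. G i (k - i))"
    unfolding pmult_def
    apply (simp add: atLeast0AtMost sum_distrib_right)
    apply (rule sum.cong, simp)
    apply (rule sum.cong, simp)
    apply (simp add: G_def drop_take min_def)
    done
  show ?thesis using 1 2 3 4 by simp
qed

lemma pmult_assoc: "pmult tgt x (pmult tgt y z) = pmult tgt (pmult tgt x y) z"
  by (rule ext, case_tac xa, simp add: pmult_assoc_pt)


lemma pathalg_zero: "(\<lambda>_. 0) \<in> pathalg V E src tgt"
  by (simp add: pathalg_def)

lemma pathalg_lin:
  assumes "x \<in> pathalg V E src tgt" "y \<in> pathalg V E src tgt"
  shows "(\<lambda>p. a * x p + b * y p) \<in> pathalg V E src tgt"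
proof -
  have "{p. a * x p + b * y p \<noteq> 0} \<subseteq> {p. x p \<noteq> 0} \<union> {p. y p \<noteq> 0}" by auto
  then show ?thesis using assms unfolding pathalg_def
    by (auto intro: finite_subset)
qed

lemma pathalg_add:
  assumes "x \<in> pathalg V E src tgt" "y \<in> pathalg V E src tgt"
  shows "(\<lambda>p. x p + y p) \<in> pathalg V E src tgt"
  using pathalg_lin[OF assms, of 1 1] by simp

lemma pathalg_diff:
  assumes "x \<in> pathalg V E src tgt" "y \<in> pathalg V E src tgt"
  shows "(\<lambda>p. x p - y p) \<in> pathalg V E src tgt"
  using pathalg_lin[OF assms, of 1 "-1"] by simp

lemma pathalg_smult:
  assumes "x \<in> pathalg V E src tgt"
  shows "(\<lambda>p. a * x p) \<in> pathalg V E src tgt"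
  using pathalg_lin[OF assms assms, of a 0] by simp

lemma pathalg_sum:
  assumes "finite F" "\<forall>i\<in>F. f i \<in> pathalg V E src tgt"
  shows "(\<lambda>p. \<Sum>i\<in>F. c i * f i p) \<in> pathalg V E src tgt"
  using assms
proof (induction F rule: finite_induct)
  case empty then show ?case by (simp add: pathalg_zero)
next
  case (insert i F)
  have "(\<lambda>p. \<Sum>i\<in>insert i F. c i * f i p) = (\<lambda>p. 1 * (\<Sum>i\<in>F. c i * f i p) + c i * f i p)"
    using insert by (simp add: add.commute)
  moreover have "(\<lambda>p. 1 * (\<Sum>i\<in>F. c i * f i p) + c i * f i p) \<in> pathalg V E src tgt"
    by (rule pathalg_lin) (use insert in auto)
  ultimately show ?case by simp
qed

lemma pathalg_sum':
  assumes "finite F" "\<forall>i\<in>F. f i \<in> pathalg V E src tgt"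
  shows "(\<lambda>p. \<Sum>i\<in>F. f i p) \<in> pathalg V E src tgt"
  using pathalg_sum[OF assms, of "\<lambda>_. 1"] by simp

lemma delta_pathalg: "pvalid V E src tgt p \<Longrightarrow> delta p \<in> pathalg V E src tgt"
  by (auto simp: pathalg_def delta_def)

lemma pmult_pathalg:
  assumes x: "x \<in> pathalg V E src tgt" and y: "y \<in> pathalg V E src tgt"
  shows "pmult tgt x y \<in> pathalg V E src tgt"
proof -
  have key: "\<exists>i\<le>length zs. x (v, take i zs) \<noteq> 0 \<and> y (pend_aux tgt v (take i zs), drop i zs) \<noteq> 0"
    if "pmult tgt x y (v, zs) \<noteq> 0" for v zs
  proof -
    from that have "(\<Sum>i\<in>{0..length zs}. x (v, take i zs) * y (pend_aux tgt v (take i zs), drop i zs)) \<noteq> 0"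
      by (simp add: pmult_def)
    then obtain i where "i \<in> {0..length zs}" "x (v, take i zs) * y (pend_aux tgt v (take i zs), drop i zs) \<noteq> 0"
      by (meson sum.not_neutral_contains_not_neutral)
    then show ?thesis by auto
  qed
  have "{p. pmult tgt x y p \<noteq> 0} \<subseteq> (\<lambda>(a, b). (fst a, snd a @ snd b)) ` ({p. x p \<noteq> 0} \<times> {p. y p \<noteq> 0})"
  proof
    fix p assume "p \<in> {p. pmult tgt x y p \<noteq> 0}"
    then obtain v zs where p: "p = (v, zs)" "pmult tgt x y (v, zs) \<noteq> 0" by (cases p) auto
    then obtain i where "x (v, take i zs) \<noteq> 0" "y (pend_aux tgt v (take i zs), drop i zs) \<noteq> 0"
      using key by blast
    then show "p \<in> (\<lambda>(a, b). (fst a, snd a @ snd b)) ` ({p. x p \<noteq> 0} \<times> {p. y p \<noteq> 0})"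
      using p by (auto intro!: image_eqI[where x="((v, take i zs), (pend_aux tgt v (take i zs), drop i zs))"])
  qed
  moreover have "finite ({p. x p \<noteq> 0} \<times> {p. y p \<noteq> 0})" using x y by (simp add: pathalg_def)
  ultimately have fin: "finite {p. pmult tgt x y p \<noteq> 0}" by (meson finite_imageI finite_subset)
  have valid: "pvalid V E src tgt p" if "pmult tgt x y p \<noteq> 0" for p
  proof -
    obtain v zs where p: "p = (v, zs)" by (cases p)
    have "pmult tgt x y (v, zs) \<noteq> 0" using that p by simp
    then obtain i where "x (v, take i zs) \<noteq> 0" "y (pend_aux tgt v (take i zs), drop i zs) \<noteq> 0"
      using key by blast
    then have "pvalid_aux V E src tgt v (take i zs)" "pvalid_aux V E src tgt (pend_aux tgt v (take i zs)) (drop i zs)"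
      using x y by (auto simp: pathalg_def pvalid_def)
    then have "pvalid_aux V E src tgt v (take i zs @ drop i zs)" by (simp only: pvalid_aux_append)
    then show ?thesis by (simp add: p pvalid_def)
  qed
  show ?thesis unfolding pathalg_def mem_Collect_eq using fin valid by blast
qed

locale idl =
  fixes V :: "'v set" and E :: "'e set" and src tgt :: "'e \<Rightarrow> 'v"
    and I :: "(('v,'e) qpath \<Rightarrow> 'k::field) set"
  assumes idl: "is_ideal V E src tgt I"
begin

abbreviation "PA \<equiv> pathalg V E src tgt"

lemma I_PA: "x \<in> I \<Longrightarrow> x \<in> PA"
  using idl by (auto simp: is_ideal_def)

lemma I_zero: "(\<lambda>_. 0) \<in> I"
  using idl by (auto simp: is_ideal_def)

lemma I_add: "x \<in> I \<Longrightarrow> y \<in> I \<Longrightarrow> (\<lambda>p. x p + y p) \<in> I"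
  using idl by (auto simp: is_ideal_def)

lemma I_smult: "x \<in> I \<Longrightarrow> (\<lambda>p. c * x p) \<in> I"
  using idl by (auto simp: is_ideal_def)

lemma I_lin: "x \<in> I \<Longrightarrow> y \<in> I \<Longrightarrow> (\<lambda>p. a * x p + b * y p) \<in> I"
proof -
  assume "x \<in> I" "y \<in> I"
  then have "(\<lambda>p. a * x p) \<in> I" "(\<lambda>p. b * y p) \<in> I" by (simp_all add: I_smult)
  from I_add[OF this] show ?thesis .
qed

lemma I_diff: "x \<in> I \<Longrightarrow> y \<in> I \<Longrightarrow> (\<lambda>p. x p - y p) \<in> I"
  using I_lin[of x y 1 "-1"] by simp

lemma I_neg: "x \<in> I \<Longrightarrow> (\<lambda>p. - x p) \<in> I"
  using I_smult[of x "-1"] by simp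

lemma I_neg_iff: "(\<lambda>p. - x p) \<in> I \<longleftrightarrow> x \<in> I"
proof
  assume "(\<lambda>p. - x p) \<in> I"
  from I_neg[OF this] show "x \<in> I" by simp
qed (rule I_neg)

lemma I_sum: "finite F \<Longrightarrow> \<forall>i\<in>F. f i \<in> I \<Longrightarrow> (\<lambda>p. \<Sum>i\<in>F. c i * f i p) \<in> I"
proof (induction F rule: finite_induct)
  case empty then show ?case by (simp add: I_zero)
next
  case (insert i F)
  have "(\<lambda>p. \<Sum>i\<in>insert i F. c i * f i p) = (\<lambda>p. 1 * (\<Sum>i\<in>F. c i * f i p) + c i * f i p)"
    using insert by (simp add: add.commute)
  moreover have "(\<lambda>p. 1 * (\<Sum>i\<in>F. c i * f i p) + c i * f i p) \<in> I"
    by (rule I_lin) (use insert in auto)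
  ultimately show ?case by simp
qed

lemma I_sum': "finite F \<Longrightarrow> \<forall>i\<in>F. f i \<in> I \<Longrightarrow> (\<lambda>p. \<Sum>i\<in>F. f i p) \<in> I"
  using I_sum[of F f "\<lambda>_. 1"] by simp

lemma I_lmult: "a \<in> PA \<Longrightarrow> x \<in> I \<Longrightarrow> pmult tgt a x \<in> I"
  using idl by (auto simp: is_ideal_def)

lemma I_rmult: "a \<in> PA \<Longrightarrow> x \<in> I \<Longrightarrow> pmult tgt x a \<in> I"
  using idl by (auto simp: is_ideal_def)

lemma cong_trans: "(\<lambda>p. x p - y p) \<in> I \<Longrightarrow> (\<lambda>p. y p - z p) \<in> I \<Longrightarrow> (\<lambda>p. x p - z p) \<in> I"
  using I_add[of "\<lambda>p. x p - y p" "\<lambda>p. y p - z p"] by simp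

lemma cong_sym: "(\<lambda>p. x p - y p) \<in> I \<Longrightarrow> (\<lambda>p. y p - x p) \<in> I"
  using I_neg[of "\<lambda>p. x p - y p"] by simp

lemma cong_lmult: "a \<in> PA \<Longrightarrow> (\<lambda>p. x p - y p) \<in> I \<Longrightarrow>
   (\<lambda>p. pmult tgt a x p - pmult tgt a y p) \<in> I"
  using I_lmult[of a "\<lambda>p. x p - y p"] by (simp add: pmult_diff_right)

lemma cong_rmult: "a \<in> PA \<Longrightarrow> (\<lambda>p. x p - y p) \<in> I \<Longrightarrow>
   (\<lambda>p. pmult tgt x a p - pmult tgt y a p) \<in> I"
  using I_rmult[of a "\<lambda>p. x p - y p"] by (simp add: pmult_diff_left)

end


lemma pmult_at_nil: "pmult tgt x y (v, []) = x (v, []) * y (v, [])"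
  by (simp add: pmult_def)

lemma pmult_at_single:
  "pmult tgt x y (v, [a]) = x (v, []) * y (v, [a]) + x (v, [a]) * y (tgt a, [])"
  by (simp add: pmult_def)

lemma ideal_gen_le: "is_ideal V E src tgt J \<Longrightarrow> S \<subseteq> J \<Longrightarrow> ideal_gen V E src tgt S \<subseteq> J"
  unfolding ideal_gen_def by blast

definition Z1 :: "'v set \<Rightarrow> 'e set \<Rightarrow> ('e \<Rightarrow> 'v) \<Rightarrow> ('e \<Rightarrow> 'v) \<Rightarrow> (('v,'e) qpath \<Rightarrow> 'k::field) set" where
  "Z1 V E src tgt = {x \<in> pathalg V E src tgt. \<forall>v. x (v, []) = 0}"

definition Z2 :: "'v set \<Rightarrow> 'e set \<Rightarrow> ('e \<Rightarrow> 'v) \<Rightarrow> ('e \<Rightarrow> 'v) \<Rightarrow> (('v,'e) qpath \<Rightarrow> 'k::field) set" where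
  "Z2 V E src tgt = {x \<in> pathalg V E src tgt. \<forall>v. x (v, []) = 0 \<and> (\<forall>a. x (v, [a]) = 0)}"

lemma Z1_ideal: "is_ideal V E src tgt (Z1 V E src tgt)"
  unfolding is_ideal_def Z1_def
  by (auto simp: pathalg_zero pathalg_add pathalg_smult pmult_pathalg pmult_at_nil)

lemma Z2_ideal: "is_ideal V E src tgt (Z2 V E src tgt)"
  unfolding is_ideal_def Z2_def
  by (auto simp: pathalg_zero pathalg_add pathalg_smult pmult_pathalg pmult_at_nil pmult_at_single)

lemma arrow_ideal_Z1:
  assumes "\<forall>a\<in>E. src a \<in> V \<and> tgt a \<in> V"
  shows "arrow_ideal V E src tgt \<subseteq> Z1 V E src tgt"
  unfolding arrow_ideal_def
proof (rule ideal_gen_le[OF Z1_ideal])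
  show "arr src ` E \<subseteq> Z1 V E src tgt"
  proof
    fix x assume "x \<in> arr src ` E"
    then obtain a where a: "a \<in> E" "x = arr src a" by auto
    have "pvalid V E src tgt (src a, [a])" using a assms by (simp add: pvalid_def)
    then show "x \<in> Z1 V E src tgt" using a
      by (auto simp: Z1_def arr_def delta_pathalg) (simp add: delta_def)
  qed
qed

lemma arrow_ideal_sq_Z2:
  assumes "\<forall>a\<in>E. src a \<in> V \<and> tgt a \<in> V"
  shows "arrow_ideal_sq V E src tgt \<subseteq> Z2 V E src tgt"
  unfolding arrow_ideal_sq_def
proof (rule ideal_gen_le[OF Z2_ideal])
  show "{pmult tgt r s |r s. r \<in> arrow_ideal V E src tgt \<and> s \<in> arrow_ideal V E src tgt}
     \<subseteq> Z2 V E src tgt"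
  proof
    fix x assume "x \<in> {pmult tgt r s |r s. r \<in> arrow_ideal V E src tgt \<and> s \<in> arrow_ideal V E src tgt}"
    then obtain r s where rs: "x = pmult tgt r s" "r \<in> Z1 V E src tgt" "s \<in> Z1 V E src tgt"
      using arrow_ideal_Z1[OF assms] by blast
    then show "x \<in> Z2 V E src tgt"
      by (auto simp: Z1_def Z2_def pmult_pathalg pmult_at_nil pmult_at_single)
  qed
qed


locale setting = idl V E src tgt I
  for V :: "'v set" and E :: "'e set" and src tgt :: "'e \<Rightarrow> 'v"
    and I :: "(('v,'e) qpath \<Rightarrow> 'k::field) set" +
  fixes Q :: "('v,'e) qpath set"
  assumes finV: "finite V" and finE: "finite E"
    and ends: "\<forall>a\<in>E. src a \<in> V \<and> tgt a \<in> V"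
    and conn: "quiver_connected V E src tgt"
    and Isq: "I \<subseteq> arrow_ideal_sq V E src tgt"
    and basis: "path_basis_mod V E src tgt I Q"
    and hv: "\<forall>v\<in>V. \<exists>q\<in>Q. (\<lambda>p. vtx v p - delta q p) \<in> I"
    and ha: "\<forall>a\<in>E. \<exists>q\<in>Q. (\<lambda>p. arr src a p - delta q p) \<in> I"
    and hc: "\<forall>q\<in>Q. pstart q = pend tgt q \<longrightarrow> (\<exists>v\<in>V. (\<lambda>p. delta q p - vtx v p) \<in> I)"
begin

definition Qfun :: "(('v,'e) qpath \<Rightarrow> 'k) \<Rightarrow> bool" where
  "Qfun g \<longleftrightarrow> finite {p. g p \<noteq> 0} \<and> {p. g p \<noteq> 0} \<subseteq> Q"

lemma I_Z2: "x \<in> I \<Longrightarrow> x (v, []) = 0 \<and> x (v, [a]) = 0"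
proof -
  assume "x \<in> I"
  then have "x \<in> Z2 V E src tgt" using Isq arrow_ideal_sq_Z2[OF ends] by blast
  then show ?thesis unfolding Z2_def by blast
qed

lemma Q_valid: "q \<in> Q \<Longrightarrow> pvalid V E src tgt q"
  using basis unfolding path_basis_mod_def by (elim conjE) blast

lemma basis_indep: "\<forall>F c. finite F \<and> F \<subseteq> Q \<and> (\<lambda>p. \<Sum>q\<in>F. c q * (delta q p :: 'k)) \<in> I \<longrightarrow> (\<forall>q\<in>F. c q = 0)"
  using basis unfolding path_basis_mod_def by (elim conjE) assumption

lemma basis_span: "\<forall>x\<in>PA. \<exists>F c. finite F \<and> F \<subseteq> Q \<and>
        (\<lambda>p. x p - (\<Sum>q\<in>F. c q * (delta q p :: 'k))) \<in> I"
  using basis unfolding path_basis_mod_def by (elim conjE) assumption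

lemma Q_indep: assumes "Qfun g" "g \<in> I" shows "g p = 0"
proof -
  let ?F = "{p. g p \<noteq> 0}"
  have f: "finite ?F" using assms by (simp add: Qfun_def)
  have e: "(\<lambda>p. \<Sum>q\<in>?F. g q * delta q p) = g"
    by (rule ext) (simp add: sum_delta_fun[OF f])
  note b = basis_indep
  have "?F \<subseteq> Q" using assms by (simp add: Qfun_def)
  moreover have "(\<lambda>p. \<Sum>q\<in>?F. g q * delta q p) \<in> I" using e assms(2) by simp
  ultimately have "\<forall>q\<in>?F. g q = 0" using b f by blast
  then show ?thesis by blast
qed

lemma Q_span: assumes "x \<in> PA" shows "\<exists>g. Qfun g \<and> (\<lambda>p. x p - g p) \<in> I"
proof -
  obtain F c where F: "finite F" "F \<subseteq> Q" "(\<lambda>p. x p - (\<Sum>q\<in>F. c q * delta q p)) \<in> I"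
    using basis_span assms by blast
  let ?g = "\<lambda>p. \<Sum>q\<in>F. c q * delta q p"
  have g: "?g = (\<lambda>p. if p \<in> F then c p else 0)" by (rule ext) (simp add: sum_delta_fun[OF F(1)])
  have "{p. ?g p \<noteq> 0} \<subseteq> F" by (auto simp: sum_delta_fun[OF F(1)] split: if_splits)
  then have "Qfun ?g" using F by (auto simp: Qfun_def intro: finite_subset)
  then show ?thesis using F by blast
qed

lemma Qfun_PA: "Qfun g \<Longrightarrow> g \<in> PA"
  unfolding Qfun_def pathalg_def by (auto intro: Q_valid)

lemma Qfun_lin: "Qfun g \<Longrightarrow> Qfun h \<Longrightarrow> Qfun (\<lambda>p. a * g p + b * h p)"
proof -
  assume g: "Qfun g" and h: "Qfun h"
  have s: "{p. a * g p + b * h p \<noteq> 0} \<subseteq> {p. g p \<noteq> 0} \<union> {p. h p \<noteq> 0}" by auto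
  have "finite ({p. g p \<noteq> 0} \<union> {p. h p \<noteq> 0})" using g h by (simp add: Qfun_def)
  from finite_subset[OF s this] have "finite {p. a * g p + b * h p \<noteq> 0}" .
  moreover have "{p. g p \<noteq> 0} \<union> {p. h p \<noteq> 0} \<subseteq> Q" using g h by (simp add: Qfun_def)
  ultimately show ?thesis unfolding Qfun_def using order_trans[OF s] by blast
qed

lemma Qfun_diff: "Qfun g \<Longrightarrow> Qfun h \<Longrightarrow> Qfun (\<lambda>p. g p - h p)"
  using Qfun_lin[of g h 1 "-1"] by simp

lemma Qfun_mult: "Qfun g \<Longrightarrow> Qfun (\<lambda>p. c p * g p)"
proof -
  assume g: "Qfun g"
  have s: "{p. c p * g p \<noteq> 0} \<subseteq> {p. g p \<noteq> 0}" by auto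
  have "finite {p. g p \<noteq> 0}" using g by (simp add: Qfun_def)
  from finite_subset[OF s this] have "finite {p. c p * g p \<noteq> 0}" .
  moreover have "{p. g p \<noteq> 0} \<subseteq> Q" using g by (simp add: Qfun_def)
  ultimately show ?thesis unfolding Qfun_def using order_trans[OF s] by blast
qed

lemma Qfun_delta: "q \<in> Q \<Longrightarrow> Qfun (delta q)"
proof -
  assume "q \<in> Q"
  moreover have "{p. delta q p \<noteq> (0::'k)} = {q}" by (auto simp: delta_def)
  ultimately show ?thesis by (simp add: Qfun_def)
qed

lemma vtx_Q: assumes "v \<in> V" shows "(v, []) \<in> Q"
proof -
  obtain q where q: "q \<in> Q" "(\<lambda>p. vtx v p - delta q p) \<in> I" using hv assms by blast
  from I_Z2[OF q(2)] have "vtx v (v, []::'e list) - delta q (v, []) = (0::'k)" by blast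
  then have "q = (v, [])" by (auto simp: vtx_def delta_def split: if_splits)
  then show ?thesis using q by simp
qed

lemma arr_Q: assumes "a \<in> E" shows "(src a, [a]) \<in> Q"
proof -
  obtain q where q: "q \<in> Q" "(\<lambda>p. arr src a p - delta q p) \<in> I" using ha assms by blast
  from I_Z2[OF q(2)] have "arr src a (src a, [a]) - delta q (src a, [a]) = (0::'k)" by blast
  then have "q = (src a, [a])" by (auto simp: arr_def delta_def split: if_splits)
  then show ?thesis using q by simp
qed

lemma cyc_Q: assumes "q \<in> Q" "pstart q = pend tgt q" shows "q = (fst q, [])"
proof -
  obtain v where v: "v \<in> V" "(\<lambda>p. delta q p - vtx v p) \<in> I" using hc assms by blast
  obtain u zs where uq: "q = (u, zs)" by (cases q)
  show ?thesis
  proof (rule ccontr)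
    assume "q \<noteq> (fst q, [])"
    then have "zs \<noteq> []" using uq by simp
    from I_Z2[OF v(2)] have "delta q (v, []) - vtx v (v, []::'e list) = (0::'k)" by blast
    moreover have "delta q (v, []::'e list) = (0::'k)" using uq \<open>zs \<noteq> []\<close> by (simp add: delta_def)
    moreover have "vtx v (v, []::'e list) = (1::'k)" by (simp add: delta_def vtx_def)
    ultimately show False by simp
  qed
qed

end


context setting begin

lemma vtx_PA: "w \<in> V \<Longrightarrow> delta (w, []) \<in> PA"
  by (rule delta_pathalg) (simp add: pvalid_def)

lemma sandwich_pt:
  fixes g :: "('v,'e) qpath \<Rightarrow> 'k"
  shows "pmult tgt (pmult tgt (delta (w, [])) g) (delta (w', [])) (u, zs) =
     (if u = w \<and> pend_aux tgt u zs = w' then g (u, zs) else 0)"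
  by (simp add: pmult_vtx_left pmult_vtx_right)

lemma sandwich:
  fixes g :: "('v,'e) qpath \<Rightarrow> 'k"
  shows "pmult tgt (pmult tgt (delta (w, [])) g) (delta (w', [])) =
     (\<lambda>p. if fst p = w \<and> pend tgt p = w' then g p else 0)"
proof (rule ext)
  fix p :: "('v,'e) qpath"
  obtain u zs where "p = (u, zs)" by (cases p)
  then show "pmult tgt (pmult tgt (delta (w, [])) g) (delta (w', [])) p =
     (if fst p = w \<and> pend tgt p = w' then g p else 0)"
    by (auto simp: sandwich_pt pend_def)
qed

lemma cycle_I:
  assumes val: "pvalid_aux V E src tgt w cs" and cyc: "pend_aux tgt w cs = w" and ne: "cs \<noteq> []"
  shows "delta (w, cs) \<in> I"
proof -
  have wV: "w \<in> V" using val by (rule pvalid_aux_start)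
  have dPA: "delta (w, cs) \<in> PA" using val by (simp add: delta_pathalg pvalid_def)
  obtain g where g: "Qfun g" "(\<lambda>p. delta (w, cs) p - g p) \<in> I" using Q_span[OF dPA] by blast
  let ?ew = "delta (w, []) :: ('v,'e) qpath \<Rightarrow> 'k"
  have h: "(\<lambda>p. pmult tgt (pmult tgt ?ew (delta (w, cs))) ?ew p - pmult tgt (pmult tgt ?ew g) ?ew p) \<in> I"
    by (rule cong_rmult[OF vtx_PA[OF wV]], rule cong_lmult[OF vtx_PA[OF wV]], rule g(2))
  have e1: "pmult tgt (pmult tgt ?ew (delta (w, cs))) ?ew = delta (w, cs)"
    unfolding sandwich by (rule ext) (auto simp: delta_def pend_def cyc)
  define g' where "g' = (\<lambda>p. if fst p = w \<and> pend tgt p = w then g p else 0)"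
  have e2: "pmult tgt (pmult tgt ?ew g) ?ew = g'" unfolding sandwich g'_def ..
  have Qg': "Qfun g'"
  proof -
    have "Qfun (\<lambda>p. (if fst p = w \<and> pend tgt p = w then 1 else 0) * g p)" by (rule Qfun_mult[OF g(1)])
    moreover have "(\<lambda>p. (if fst p = w \<and> pend tgt p = w then 1 else 0) * g p) = g'"
      by (rule ext) (simp add: g'_def)
    ultimately show ?thesis by simp
  qed
  have g'0: "g' p = 0" if "p \<noteq> (w, [])" for p
  proof (rule ccontr)
    assume nz: "g' p \<noteq> 0"
    then have "p \<in> Q" using Qg' by (auto simp: Qfun_def)
    moreover have "fst p = w" "pend tgt p = w" using nz by (auto simp: g'_def split: if_splits)
    ultimately have "p = (fst p, [])" by (intro cyc_Q) (simp_all add: pstart_def)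
    then show False using that \<open>fst p = w\<close> by simp
  qed
  have h2: "(\<lambda>p. delta (w, cs) p - g' p) \<in> I" using h unfolding e1 e2 .
  from I_Z2[OF h2] have "delta (w, cs) (w, []) - g' (w, []) = 0" by blast
  then have "g' (w, []) = 0" using ne by (simp add: delta_def)
  then have "g' = (\<lambda>_. 0)" using g'0 by (metis ext)
  then show ?thesis using h2 by simp
qed

lemma long_path_I:
  assumes val: "pvalid_aux V E src tgt v zs" and len: "card V \<le> length zs"
  shows "delta (v, zs) \<in> I"
proof -
  let ?n = "length zs"
  define f where "f i = pend_aux tgt v (take i zs)" for i
  have fV: "f ` {0..?n} \<subseteq> V"
  proof
    fix y assume "y \<in> f ` {0..?n}"
    then obtain i where y: "y = f i" by auto
    have "pvalid_aux V E src tgt v (take i zs @ drop i zs)" using val by simp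
    then have "pvalid_aux V E src tgt v (take i zs)" by (simp only: pvalid_aux_append)
    then show "y \<in> V" using y by (simp add: f_def pvalid_aux_end)
  qed
  have "card (f ` {0..?n}) \<le> card V" using fV finV by (rule card_mono[rotated])
  then have "card (f ` {0..?n}) < card {0..?n}" using len by simp
  then have "\<not> inj_on f {0..?n}" by (rule pigeonhole)
  then obtain i j where ij: "i \<in> {0..?n}" "j \<in> {0..?n}" "i \<noteq> j" "f i = f j"
    unfolding inj_on_def by blast
  obtain i j where ij: "i < j" "j \<le> ?n" "f i = f j"
  proof (cases "i < j")
    case True then show ?thesis using that ij by auto
  next
    case False then show ?thesis using that[of j i] ij by auto
  qed
  define w where "w = f i"
  define cs where "cs = drop i (take j zs)"
  have tj: "take j zs = take i zs @ cs"
    unfolding cs_def by (metis append_take_drop_id ij(1) less_imp_le_nat min.absorb1 take_take)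
  have zs: "zs = take i zs @ cs @ drop j zs"
    by (metis append.assoc append_take_drop_id tj)
  have pw: "pend_aux tgt v (take i zs) = w" by (simp add: w_def f_def)
  have pc: "pend_aux tgt w cs = w"
    using ij(3) pw unfolding f_def w_def by (metis pend_aux_append tj)
  have "pvalid_aux V E src tgt v (take i zs @ cs @ drop j zs)" using val zs by simp
  then have vi: "pvalid_aux V E src tgt v (take i zs)" and vc: "pvalid_aux V E src tgt w cs"
    and vj: "pvalid_aux V E src tgt w (drop j zs)"
    by (simp_all only: pvalid_aux_append pw pc)
  have ne: "cs \<noteq> []" using ij unfolding cs_def by simp
  have cI: "delta (w, cs) \<in> I" by (rule cycle_I[OF vc pc ne])
  have "pmult tgt (pmult tgt (delta (v, take i zs)) (delta (w, cs))) (delta (w, drop j zs)) =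
     (delta (v, zs) :: ('v,'e) qpath \<Rightarrow> 'k)"
    apply (subst pmult_delta, simp add: pw)
    apply (subst pmult_delta)
    apply (simp add: pend_aux_append pw pc)
    using zs by simp
  moreover have "pmult tgt (pmult tgt (delta (v, take i zs)) (delta (w, cs))) (delta (w, drop j zs)) \<in> I"
    by (rule I_rmult[OF _ I_lmult[OF _ cI]]) (simp_all add: delta_pathalg pvalid_def vi vj)
  ultimately show ?thesis by simp
qed

lemma Q_short: assumes "q \<in> Q" shows "length (snd q) < card V"
proof (rule ccontr)
  assume "\<not> length (snd q) < card V"
  then have "delta q \<in> I"
    using long_path_I[of "fst q" "snd q"] Q_valid[OF assms] by (simp add: pvalid_def)
  then have "delta q q = (0::'k)" using Q_indep Qfun_delta[OF assms] by blast
  then show False by (simp add: delta_def)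
qed

lemma Q_fin: "finite Q"
proof -
  have "Q \<subseteq> V \<times> {xs. set xs \<subseteq> E \<and> length xs \<le> card V}"
  proof
    fix q assume q: "q \<in> Q"
    obtain v zs where vz: "q = (v, zs)" by (cases q)
    have "pvalid_aux V E src tgt v zs" using Q_valid[OF q] vz by (simp add: pvalid_def)
    then have "v \<in> V" "set zs \<subseteq> E" by (auto dest: pvalid_aux_start pvalid_aux_set)
    moreover have "length zs \<le> card V" using Q_short[OF q] vz by simp
    ultimately show "q \<in> V \<times> {xs. set xs \<subseteq> E \<and> length xs \<le> card V}" using vz by simp
  qed
  moreover have "finite (V \<times> {xs. set xs \<subseteq> E \<and> length xs \<le> card V})"
    using finV finE by (simp add: finite_lists_length_le)
  ultimately show ?thesis by (rule finite_subset)
qed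

end


definition dm :: "'v set \<Rightarrow> 'e set \<Rightarrow> ('e \<Rightarrow> 'v) \<Rightarrow> ('e \<Rightarrow> 'v) \<Rightarrow> (('v,'e) qpath \<Rightarrow> 'k::field) set
     \<Rightarrow> ((('v,'e) qpath \<Rightarrow> 'k) \<Rightarrow> (('v,'e) qpath \<Rightarrow> 'k)) \<Rightarrow> bool" where
  "dm V E src tgt I D \<longleftrightarrow>
     (\<forall>x\<in>pathalg V E src tgt. D x \<in> pathalg V E src tgt) \<and>
     (\<forall>x\<in>pathalg V E src tgt. \<forall>y\<in>pathalg V E src tgt. \<forall>a b.
        (\<lambda>p. D (\<lambda>q. a * x q + b * y q) p - (a * D x p + b * D y p)) \<in> I) \<and>
     (\<forall>x\<in>pathalg V E src tgt. \<forall>y\<in>pathalg V E src tgt.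
        (\<lambda>p. D (pmult tgt x y) p - (pmult tgt (D x) y p + pmult tgt x (D y) p)) \<in> I)"

lemma is_diff_op_dm: "is_diff_op V E src tgt I D \<longleftrightarrow>
   (\<forall>x. x \<notin> pathalg V E src tgt \<longrightarrow> D x = (\<lambda>_. 0)) \<and> dm V E src tgt I D"
  unfolding is_diff_op_def dm_def by blast

definition adj :: "('e \<Rightarrow> 'v) \<Rightarrow> (('v,'e) qpath \<Rightarrow> 'k::field) \<Rightarrow> (('v,'e) qpath \<Rightarrow> 'k) \<Rightarrow> (('v,'e) qpath \<Rightarrow> 'k)" where
  "adj tgt m x = (\<lambda>p. pmult tgt m x p - pmult tgt x m p)"

context idl begin

lemma dm_PA: "dm V E src tgt I D \<Longrightarrow> x \<in> PA \<Longrightarrow> D x \<in> PA"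
  unfolding dm_def by blast

lemma dm_linD: "dm V E src tgt I D \<Longrightarrow> x \<in> PA \<Longrightarrow> y \<in> PA \<Longrightarrow>
   (\<lambda>p. D (\<lambda>q. a * x q + b * y q) p - (a * D x p + b * D y p)) \<in> I"
  unfolding dm_def by blast

lemma dm_leibD: "dm V E src tgt I D \<Longrightarrow> x \<in> PA \<Longrightarrow> y \<in> PA \<Longrightarrow>
   (\<lambda>p. D (pmult tgt x y) p - (pmult tgt (D x) y p + pmult tgt x (D y) p)) \<in> I"
  unfolding dm_def by blast

lemma dm_lin:
  assumes d1: "dm V E src tgt I D1" and d2: "dm V E src tgt I D2"
  shows "dm V E src tgt I (\<lambda>x p. a * D1 x p + b * D2 x p)"
  unfolding dm_def
proof (intro conjI ballI allI)
  fix x :: "('v,'e) qpath \<Rightarrow> 'k" assume "x \<in> PA"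
  then show "(\<lambda>p. a * D1 x p + b * D2 x p) \<in> PA"
    by (intro pathalg_lin dm_PA[OF d1] dm_PA[OF d2])
next
  fix x y :: "('v,'e) qpath \<Rightarrow> 'k" and c d :: 'k assume x: "x \<in> PA" and y: "y \<in> PA"
  let ?L1 = "\<lambda>p. D1 (\<lambda>q. c * x q + d * y q) p - (c * D1 x p + d * D1 y p)"
  let ?L2 = "\<lambda>p. D2 (\<lambda>q. c * x q + d * y q) p - (c * D2 x p + d * D2 y p)"
  have "(\<lambda>p. a * ?L1 p + b * ?L2 p) \<in> I"
    by (rule I_lin[OF dm_linD[OF d1 x y] dm_linD[OF d2 x y]])
  moreover have "(\<lambda>p. a * ?L1 p + b * ?L2 p) =
    (\<lambda>p. (\<lambda>x p. a * D1 x p + b * D2 x p) (\<lambda>q. c * x q + d * y q) p -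
          (c * (\<lambda>x p. a * D1 x p + b * D2 x p) x p + d * (\<lambda>x p. a * D1 x p + b * D2 x p) y p))"
    by (rule ext) (simp add: algebra_simps)
  ultimately show "(\<lambda>p. (\<lambda>x p. a * D1 x p + b * D2 x p) (\<lambda>q. c * x q + d * y q) p -
          (c * (\<lambda>x p. a * D1 x p + b * D2 x p) x p + d * (\<lambda>x p. a * D1 x p + b * D2 x p) y p)) \<in> I"
    by simp
next
  fix x y :: "('v,'e) qpath \<Rightarrow> 'k" assume x: "x \<in> PA" and y: "y \<in> PA"
  let ?L1 = "\<lambda>p. D1 (pmult tgt x y) p - (pmult tgt (D1 x) y p + pmult tgt x (D1 y) p)"
  let ?L2 = "\<lambda>p. D2 (pmult tgt x y) p - (pmult tgt (D2 x) y p + pmult tgt x (D2 y) p)"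
  have "(\<lambda>p. a * ?L1 p + b * ?L2 p) \<in> I"
    by (rule I_lin[OF dm_leibD[OF d1 x y] dm_leibD[OF d2 x y]])
  moreover have "(\<lambda>p. a * ?L1 p + b * ?L2 p) =
    (\<lambda>p. (\<lambda>x p. a * D1 x p + b * D2 x p) (pmult tgt x y) p -
          (pmult tgt ((\<lambda>x p. a * D1 x p + b * D2 x p) x) y p +
           pmult tgt x ((\<lambda>x p. a * D1 x p + b * D2 x p) y) p))"
    by (rule ext) (simp add: pmult_lin_left pmult_lin_right algebra_simps)
  ultimately show "(\<lambda>p. (\<lambda>x p. a * D1 x p + b * D2 x p) (pmult tgt x y) p -
          (pmult tgt ((\<lambda>x p. a * D1 x p + b * D2 x p) x) y p +
           pmult tgt x ((\<lambda>x p. a * D1 x p + b * D2 x p) y) p)) \<in> I"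
    by simp
qed

lemma dm_adj:
  assumes m: "m \<in> PA"
  shows "dm V E src tgt I (adj tgt m)"
  unfolding dm_def
proof (intro conjI ballI allI)
  fix x :: "('v,'e) qpath \<Rightarrow> 'k" assume "x \<in> PA"
  then show "adj tgt m x \<in> PA" unfolding adj_def
    by (intro pathalg_diff pmult_pathalg m)
next
  fix x y :: "('v,'e) qpath \<Rightarrow> 'k" and c d :: 'k assume x: "x \<in> PA" and y: "y \<in> PA"
  have "(\<lambda>p. adj tgt m (\<lambda>q. c * x q + d * y q) p - (c * adj tgt m x p + d * adj tgt m y p)) = (\<lambda>_. 0)"
    unfolding adj_def by (rule ext) (simp add: pmult_lin_left pmult_lin_right algebra_simps)
  then show "(\<lambda>p. adj tgt m (\<lambda>q. c * x q + d * y q) p - (c * adj tgt m x p + d * adj tgt m y p)) \<in> I"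
    by (simp add: I_zero)
next
  fix x y :: "('v,'e) qpath \<Rightarrow> 'k" assume x: "x \<in> PA" and y: "y \<in> PA"
  have "(\<lambda>p. adj tgt m (pmult tgt x y) p - (pmult tgt (adj tgt m x) y p + pmult tgt x (adj tgt m y) p)) = (\<lambda>_. 0)"
    unfolding adj_def by (rule ext) (simp add: pmult_diff_left pmult_diff_right pmult_assoc)
  then show "(\<lambda>p. adj tgt m (pmult tgt x y) p - (pmult tgt (adj tgt m x) y p + pmult tgt x (adj tgt m y) p)) \<in> I"
    by (simp add: I_zero)
qed

lemma adj_lin_m: "adj tgt (\<lambda>p. a * m p + b * m' p) x = (\<lambda>p. a * adj tgt m x p + b * adj tgt m' x p)"
  unfolding adj_def by (rule ext) (simp add: pmult_lin_left pmult_lin_right algebra_simps)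

lemma adj_I: "m \<in> I \<Longrightarrow> x \<in> PA \<Longrightarrow> adj tgt m x \<in> I"
  unfolding adj_def by (intro I_diff I_lmult I_rmult)

lemma dm_zero: assumes d: "dm V E src tgt I D" shows "D (\<lambda>_. 0) \<in> I"
proof -
  have "(\<lambda>p. D (\<lambda>q. 0 * (0::'k) + 0 * 0) p - (0 * D (\<lambda>_. 0) p + 0 * D (\<lambda>_. 0) p)) \<in> I"
    using dm_linD[OF d pathalg_zero pathalg_zero, of 0 0] by simp
  then show ?thesis by simp
qed

lemma dm_unique:
  assumes d: "dm V E src tgt I D"
    and ends: "\<forall>a\<in>E. src a \<in> V \<and> tgt a \<in> V"
    and hv: "\<forall>v\<in>V. D (delta (v, [])) \<in> I"
    and ha: "\<forall>a\<in>E. D (delta (src a, [a])) \<in> I"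
    and x: "x \<in> PA"
  shows "D x \<in> I"
proof -
  have path: "D (delta (v, zs)) \<in> I" if "pvalid_aux V E src tgt v zs" for v zs
    using that
  proof (induction zs arbitrary: v)
    case Nil then show ?case using hv by simp
  next
    case (Cons a zs)
    have a: "a \<in> E" "src a = v" "pvalid_aux V E src tgt (tgt a) zs" using Cons.prems by auto
    have eq: "delta (v, a # zs) = pmult tgt (delta (src a, [a])) (delta (tgt a, zs))"
      using a by (simp add: pmult_delta)
    have pa: "delta (src a, [a]) \<in> PA" using a ends by (intro delta_pathalg) (auto simp: pvalid_def)
    have pz: "delta (tgt a, zs) \<in> PA" using a by (intro delta_pathalg) (simp add: pvalid_def)
    have l: "(\<lambda>p. D (pmult tgt (delta (src a, [a])) (delta (tgt a, zs))) p -
       (pmult tgt (D (delta (src a, [a]))) (delta (tgt a, zs)) p +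
        pmult tgt (delta (src a, [a])) (D (delta (tgt a, zs))) p)) \<in> I"
      by (rule dm_leibD[OF d pa pz])
    have s: "(\<lambda>p. pmult tgt (D (delta (src a, [a]))) (delta (tgt a, zs)) p +
        pmult tgt (delta (src a, [a])) (D (delta (tgt a, zs))) p) \<in> I"
      by (intro I_add I_rmult I_lmult pa pz) (use ha a Cons.IH in auto)
    from I_add[OF l s] show ?case unfolding eq by simp
  qed
  have comb: "D (\<lambda>p. \<Sum>q\<in>F. c q * delta q p) \<in> I"
    if "finite F" "\<forall>q\<in>F. pvalid V E src tgt q" for F c
    using that
  proof (induction F rule: finite_induct)
    case empty then show ?case using dm_zero[OF d] by simp
  next
    case (insert q F)
    let ?S = "\<lambda>p. \<Sum>q\<in>F. c q * delta q p"
    have SPA: "?S \<in> PA" using insert by (intro pathalg_sum) (auto intro: delta_pathalg)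
    have qPA: "delta q \<in> PA" using insert by (auto intro: delta_pathalg)
    have Dq: "D (delta q) \<in> I" using insert path[of "fst q" "snd q"] by (simp add: pvalid_def)
    have "(\<lambda>p. D (\<lambda>r. 1 * ?S r + c q * delta q r) p - (1 * D ?S p + c q * D (delta q) p)) \<in> I"
      by (rule dm_linD[OF d SPA qPA])
    moreover have "(\<lambda>p. 1 * D ?S p + c q * D (delta q) p) \<in> I"
      using insert Dq by (intro I_lin) auto
    ultimately have "(\<lambda>p. D (\<lambda>r. 1 * ?S r + c q * delta q r) p) \<in> I"
      using I_add by fastforce
    moreover have "(\<lambda>r. 1 * ?S r + c q * delta q r) = (\<lambda>p. \<Sum>q\<in>insert q F. c q * delta q p)"
      using insert by (simp add: add.commute)
    ultimately show ?case by simp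
  qed
  have "D (\<lambda>p. \<Sum>q\<in>{q. x q \<noteq> 0}. x q * delta q p) \<in> I"
    using x by (intro comb) (auto simp: pathalg_def)
  then show ?thesis using pathalg_expand[OF x] by simp
qed

end


definition linext :: "(('v,'e) qpath \<Rightarrow> ('v,'e) qpath \<Rightarrow> 'k::field) \<Rightarrow> (('v,'e) qpath \<Rightarrow> 'k) \<Rightarrow> (('v,'e) qpath \<Rightarrow> 'k)" where
  "linext L x = (\<lambda>p'. \<Sum>p\<in>{p. x p \<noteq> 0}. x p * L p p')"

lemma linext_eq: "finite F \<Longrightarrow> {p. x p \<noteq> 0} \<subseteq> F \<Longrightarrow> linext L x = (\<lambda>p'. \<Sum>p\<in>F. x p * L p p')"
  unfolding linext_def by (rule ext, rule sum.mono_neutral_left) auto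

lemma linext_delta: "linext L (delta q) = L q"
proof -
  have "linext L (delta q) = (\<lambda>p'. \<Sum>p\<in>{q}. delta q p * L p p')"
    by (rule linext_eq) (auto simp: delta_def)
  then show ?thesis by (simp add: delta_def)
qed

lemma linext_zero: "linext L (\<lambda>_. 0) = (\<lambda>_. 0)"
  by (simp add: linext_def)

lemma linext_comb:
  assumes F: "finite F" and G: "finite G" and sub: "\<forall>i\<in>F. {p. f i p \<noteq> 0} \<subseteq> G"
  shows "linext L (\<lambda>p. \<Sum>i\<in>F. c i * f i p) = (\<lambda>p'. \<Sum>i\<in>F. c i * linext L (f i) p')"
proof -
  have s: "{p. (\<Sum>i\<in>F. c i * f i p) \<noteq> 0} \<subseteq> G"
  proof
    fix p assume "p \<in> {p. (\<Sum>i\<in>F. c i * f i p) \<noteq> 0}"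
    then have "(\<Sum>i\<in>F. c i * f i p) \<noteq> 0" by simp
    then obtain i where "i \<in> F" "c i * f i p \<noteq> 0"
      by (rule sum.not_neutral_contains_not_neutral)
    then show "p \<in> G" using sub by auto
  qed
  have "linext L (\<lambda>p. \<Sum>i\<in>F. c i * f i p) = (\<lambda>p'. \<Sum>p\<in>G. (\<Sum>i\<in>F. c i * f i p) * L p p')"
    by (rule linext_eq[OF G s])
  also have "\<dots> = (\<lambda>p'. \<Sum>i\<in>F. c i * (\<Sum>p\<in>G. f i p * L p p'))"
    apply (rule ext)
    apply (simp add: sum_distrib_right sum_distrib_left mult.assoc)
    apply (rule sum.swap)
    done
  also have "\<dots> = (\<lambda>p'. \<Sum>i\<in>F. c i * linext L (f i) p')"
    apply (rule ext, rule sum.cong, simp)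
    apply (subst linext_eq[OF G, of "f _"])
    using sub apply blast
    apply simp
    done
  finally show ?thesis .
qed

lemma pmult_sum_left':
  "pmult tgt (\<lambda>p. \<Sum>i\<in>F. f i p) y = (\<lambda>p. \<Sum>i\<in>F. pmult tgt (f i) y p)"
  using pmult_sum_left[where c="\<lambda>_. 1" and tgt=tgt and F=F and f=f and y=y] by simp

lemma pmult_sum_right':
  "pmult tgt y (\<lambda>p. \<Sum>i\<in>F. f i p) = (\<lambda>p. \<Sum>i\<in>F. pmult tgt y (f i) p)"
  using pmult_sum_right[where c="\<lambda>_. 1" and tgt=tgt and F=F and f=f and y=y] by simp

lemma supp_pmult_delta:
  fixes tgt :: "'e \<Rightarrow> 'v"
  assumes "pmult tgt (delta a) (delta b) p \<noteq> (0::'k::field)"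
  shows "p = (fst a, snd a @ snd b)"
proof -
  obtain v as w bs where ab: "a = (v, as)" "b = (w, bs)" by (cases a, cases b)
  show ?thesis using assms unfolding ab pmult_delta by (simp add: delta_def split: if_splits)
qed

lemma linext_leibniz:
  fixes x y :: "('v,'e) qpath \<Rightarrow> 'k::field" and tgt :: "'e \<Rightarrow> 'v"
  assumes x: "finite {p. x p \<noteq> 0}" and y: "finite {p. y p \<noteq> 0}"
    and H: "\<forall>a\<in>{p. x p \<noteq> 0}. \<forall>b\<in>{p. y p \<noteq> 0}. linext L (pmult tgt (delta a) (delta b)) =
      (\<lambda>p. pmult tgt (L a) (delta b) p + pmult tgt (delta a) (L b) p)"
  shows "linext L (pmult tgt x y) = (\<lambda>p. pmult tgt (linext L x) y p + pmult tgt x (linext L y) p)"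
proof -
  let ?Fx = "{p. x p \<noteq> 0}" and ?Fy = "{p. y p \<noteq> 0}"
  let ?G = "(\<lambda>(a, b). (fst a, snd a @ snd b)) ` (?Fx \<times> ?Fy)"
  have G: "finite ?G" using x y by simp
  have ex: "x = (\<lambda>p. \<Sum>a\<in>?Fx. x a * delta a p)" by (rule ext) (simp add: sum_delta_fun[OF x])
  have ey: "y = (\<lambda>p. \<Sum>b\<in>?Fy. y b * delta b p)" by (rule ext) (simp add: sum_delta_fun[OF y])
  have pxy: "pmult tgt x y = (\<lambda>p. \<Sum>a\<in>?Fx. x a * (\<Sum>b\<in>?Fy. y b * pmult tgt (delta a) (delta b) p))"
  proof -
    have "pmult tgt x y = pmult tgt (\<lambda>p. \<Sum>a\<in>?Fx. x a * delta a p) (\<lambda>p. \<Sum>b\<in>?Fy. y b * delta b p)"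
      using ex ey by (rule arg_cong2[where f="pmult tgt"])
    then show ?thesis by (simp add: pmult_sum_left pmult_sum_right)
  qed
  have supp1: "\<forall>b\<in>?Fy. {p. pmult tgt (delta a) (delta b) p \<noteq> (0::'k)} \<subseteq> ?G" if "a \<in> ?Fx" for a
  proof (intro ballI subsetI)
    fix b p assume b: "b \<in> ?Fy" and "p \<in> {p. pmult tgt (delta a) (delta b) p \<noteq> (0::'k)}"
    then have "p = (fst a, snd a @ snd b)" by (auto intro: supp_pmult_delta)
    then show "p \<in> ?G" using that b by force
  qed
  have supp2: "\<forall>a\<in>?Fx. {p. (\<Sum>b\<in>?Fy. y b * pmult tgt (delta a) (delta b) p) \<noteq> 0} \<subseteq> ?G"
  proof (intro ballI subsetI)
    fix a p assume a: "a \<in> ?Fx" and "p \<in> {p. (\<Sum>b\<in>?Fy. y b * pmult tgt (delta a) (delta b) p) \<noteq> 0}"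
    then have "(\<Sum>b\<in>?Fy. y b * pmult tgt (delta a) (delta b) p) \<noteq> 0" by simp
    then obtain b where b: "b \<in> ?Fy" and nz: "y b * pmult tgt (delta a) (delta b) p \<noteq> 0"
      by (rule sum.not_neutral_contains_not_neutral)
    from nz have "p \<in> {p. pmult tgt (delta a) (delta b) p \<noteq> (0::'k)}" by simp
    then show "p \<in> ?G" using supp1[OF a] b by blast
  qed
  have "linext L (pmult tgt x y) =
     (\<lambda>p'. \<Sum>a\<in>?Fx. x a * linext L (\<lambda>p. \<Sum>b\<in>?Fy. y b * pmult tgt (delta a) (delta b) p) p')"
    unfolding pxy by (rule linext_comb[OF x G supp2])
  also have "\<dots> = (\<lambda>p'. \<Sum>a\<in>?Fx. x a * (\<Sum>b\<in>?Fy. y b * linext L (pmult tgt (delta a) (delta b)) p'))"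
    apply (rule ext, rule sum.cong, simp)
    apply (subst linext_comb[OF y G supp1], simp_all)
    done
  also have "\<dots> = (\<lambda>p'. \<Sum>a\<in>?Fx. x a * (\<Sum>b\<in>?Fy. y b *
       (pmult tgt (L a) (delta b) p' + pmult tgt (delta a) (L b) p')))"
    using H by (auto intro!: ext sum.cong)
  also have "\<dots> = (\<lambda>p. pmult tgt (linext L x) y p + pmult tgt x (linext L y) p)"
  proof -
    have lx: "linext L x = (\<lambda>p'. \<Sum>a\<in>?Fx. x a * L a p')" by (simp add: linext_def)
    have ly: "linext L y = (\<lambda>p'. \<Sum>b\<in>?Fy. y b * L b p')" by (simp add: linext_def)
    have 1: "pmult tgt (linext L x) y = (\<lambda>p. \<Sum>a\<in>?Fx. x a * (\<Sum>b\<in>?Fy. y b * pmult tgt (L a) (delta b) p))"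
    proof -
      have "pmult tgt (linext L x) y = pmult tgt (\<lambda>p'. \<Sum>a\<in>?Fx. x a * L a p') (\<lambda>p. \<Sum>b\<in>?Fy. y b * delta b p)"
        using lx ey by (rule arg_cong2[where f="pmult tgt"])
      then show ?thesis by (simp add: pmult_sum_left pmult_sum_right)
    qed
    have 2: "pmult tgt x (linext L y) = (\<lambda>p. \<Sum>a\<in>?Fx. x a * (\<Sum>b\<in>?Fy. y b * pmult tgt (delta a) (L b) p))"
    proof -
      have "pmult tgt x (linext L y) = pmult tgt (\<lambda>p. \<Sum>a\<in>?Fx. x a * delta a p) (\<lambda>p'. \<Sum>b\<in>?Fy. y b * L b p')"
        using ex ly by (rule arg_cong2[where f="pmult tgt"])
      then show ?thesis by (simp add: pmult_sum_left pmult_sum_right)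
    qed
    show ?thesis unfolding 1 2
      by (rule ext) (simp add: distrib_left sum.distrib)
  qed
  finally show ?thesis .
qed


definition modp :: "'e list \<Rightarrow> 'e list \<Rightarrow> nat \<Rightarrow> 'e list" where
  "modp qs as i = take i as @ qs @ drop (Suc i) as"

definition Dpath :: "'e \<Rightarrow> 'e list \<Rightarrow> ('v,'e) qpath \<Rightarrow> ('v,'e) qpath \<Rightarrow> 'k::field" where
  "Dpath r qs p = (\<lambda>p'. \<Sum>i\<in>{i. i < length (snd p) \<and> snd p ! i = r}. delta (fst p, modp qs (snd p) i) p')"

lemma valid_split:
  assumes "pvalid_aux V E src tgt v as" "i < length as" "as ! i = r"
  shows "pvalid_aux V E src tgt v (take i as) \<and> src r = pend_aux tgt v (take i as) \<and> r \<in> E \<and>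
    pvalid_aux V E src tgt (tgt r) (drop (Suc i) as)"
proof -
  have "as = take i as @ r # drop (Suc i) as" using assms by (metis id_take_nth_drop)
  then have "pvalid_aux V E src tgt v (take i as @ r # drop (Suc i) as)" using assms by simp
  then show ?thesis by (simp only: pvalid_aux_append) auto
qed

lemma pend_modp:
  assumes "pvalid_aux V E src tgt v as" "i < length as" "as ! i = r"
    and "pend_aux tgt (src r) qs = tgt r"
  shows "pend_aux tgt v (modp qs as i) = pend_aux tgt v as"
proof -
  have e: "as = take i as @ r # drop (Suc i) as" using assms by (metis id_take_nth_drop)
  have s: "src r = pend_aux tgt v (take i as)" using valid_split[OF assms(1-3)] by simp
  have "pend_aux tgt v as = pend_aux tgt (tgt r) (drop (Suc i) as)"
    by (subst e) (simp add: pend_aux_append)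
  moreover have "pend_aux tgt v (modp qs as i) = pend_aux tgt (tgt r) (drop (Suc i) as)"
    unfolding modp_def using assms(4) s by (simp add: pend_aux_append)
  ultimately show ?thesis by simp
qed

lemma valid_modp:
  assumes "pvalid_aux V E src tgt v as" "i < length as" "as ! i = r"
    and "pend_aux tgt (src r) qs = tgt r" and "pvalid_aux V E src tgt (src r) qs"
  shows "pvalid_aux V E src tgt v (modp qs as i)"
proof -
  have vs: "pvalid_aux V E src tgt v (take i as)" "src r = pend_aux tgt v (take i as)"
    "pvalid_aux V E src tgt (tgt r) (drop (Suc i) as)"
    using valid_split[OF assms(1-3)] by auto
  show ?thesis unfolding modp_def
    using vs assms(4,5) by (simp add: pvalid_aux_append pend_aux_append)
qed

lemma Dpath_append:
  "(Dpath r qs (v, as @ bs) :: ('v,'e) qpath \<Rightarrow> 'k::field) = (\<lambda>p.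
     (\<Sum>i\<in>{i. i < length as \<and> as ! i = r}. delta (v, modp qs as i @ bs) p) +
     (\<Sum>j\<in>{j. j < length bs \<and> bs ! j = r}. delta (v, as @ modp qs bs j) p))"
proof (rule ext)
  fix p :: "('v,'e) qpath"
  let ?Ia = "{i. i < length as \<and> as ! i = r}" and ?Ib = "{j. j < length bs \<and> bs ! j = r}"
  let ?I = "{i. i < length (as @ bs) \<and> (as @ bs) ! i = r}"
  let ?g = "\<lambda>i. delta (v, modp qs (as @ bs) i) p :: 'k"
  have I: "?I = ?Ia \<union> (\<lambda>j. length as + j) ` ?Ib"
  proof (intro set_eqI iffI)
    fix i assume "i \<in> ?I"
    then show "i \<in> ?Ia \<union> (\<lambda>j. length as + j) ` ?Ib"
      by (cases "i < length as") (auto simp: nth_append intro!: image_eqI[where x="i - length as"])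
  qed (auto simp: nth_append)
  have fa: "finite ?Ia" by simp
  have fb: "finite ((\<lambda>j. length as + j) ` ?Ib)" by simp
  have dis: "?Ia \<inter> (\<lambda>j. length as + j) ` ?Ib = {}" by auto
  have "(\<Sum>i\<in>?I. ?g i) = (\<Sum>i\<in>?Ia. ?g i) + (\<Sum>i\<in>(\<lambda>j. length as + j) ` ?Ib. ?g i)"
    unfolding I by (rule sum.union_disjoint[OF fa fb dis])
  also have "(\<Sum>i\<in>(\<lambda>j. length as + j) ` ?Ib. ?g i) = (\<Sum>j\<in>?Ib. ?g (length as + j))"
    by (simp add: sum.reindex inj_on_def)
  also have "(\<Sum>i\<in>?Ia. ?g i) = (\<Sum>i\<in>?Ia. delta (v, modp qs as i @ bs) p)"
    by (rule sum.cong) (auto simp: modp_def)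
  also have "(\<Sum>j\<in>?Ib. ?g (length as + j)) = (\<Sum>j\<in>?Ib. delta (v, as @ modp qs bs j) p)"
    by (rule sum.cong) (auto simp: modp_def)
  finally show "(Dpath r qs (v, as @ bs) :: ('v,'e) qpath \<Rightarrow> 'k) p =
     (\<Sum>i\<in>?Ia. delta (v, modp qs as i @ bs) p) + (\<Sum>j\<in>?Ib. delta (v, as @ modp qs bs j) p)"
    by (simp add: Dpath_def)
qed


definition Dop :: "'v set \<Rightarrow> 'e set \<Rightarrow> ('e \<Rightarrow> 'v) \<Rightarrow> ('e \<Rightarrow> 'v) \<Rightarrow> 'e \<Rightarrow> ('v,'e) qpath
    \<Rightarrow> (('v,'e) qpath \<Rightarrow> 'k::field) \<Rightarrow> (('v,'e) qpath \<Rightarrow> 'k)" where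
  "Dop V E src tgt r q x = (if x \<in> pathalg V E src tgt then linext (Dpath r (snd q)) x else (\<lambda>_. 0))"

lemma linext_lin:
  assumes "finite {p. x p \<noteq> 0}" "finite {p. y p \<noteq> 0}"
  shows "linext L (\<lambda>p. a * x p + b * y p) = (\<lambda>p'. a * linext L x p' + b * linext L y p')"
proof -
  let ?G = "{p. x p \<noteq> 0} \<union> {p. y p \<noteq> 0}"
  have G: "finite ?G" using assms by simp
  have "linext L (\<lambda>p. a * x p + b * y p) = (\<lambda>p'. \<Sum>p\<in>?G. (a * x p + b * y p) * L p p')"
    by (rule linext_eq[OF G]) auto
  moreover have "linext L x = (\<lambda>p'. \<Sum>p\<in>?G. x p * L p p')" by (rule linext_eq[OF G]) auto
  moreover have "linext L y = (\<lambda>p'. \<Sum>p\<in>?G. y p * L p p')" by (rule linext_eq[OF G]) auto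
  ultimately show ?thesis
    by (simp add: sum.distrib sum_distrib_left algebra_simps)
qed

context
  fixes V :: "'v set" and E :: "'e set" and src tgt :: "'e \<Rightarrow> 'v" and r :: 'e and qs :: "'e list"
  assumes hr: "pvalid_aux V E src tgt (src r) qs" and hp: "pend_aux tgt (src r) qs = tgt r"
begin

lemma Dpath_PA:
  assumes "pvalid V E src tgt p"
  shows "(Dpath r qs p :: ('v,'e) qpath \<Rightarrow> 'k::field) \<in> pathalg V E src tgt"
  unfolding Dpath_def
proof (rule pathalg_sum', simp, intro ballI)
  fix i assume "i \<in> {i. i < length (snd p) \<and> snd p ! i = r}"
  then show "(delta (fst p, modp qs (snd p) i) :: ('v,'e) qpath \<Rightarrow> 'k) \<in> pathalg V E src tgt"
    using assms hr hp by (intro delta_pathalg) (auto simp: pvalid_def intro: valid_modp)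
qed

lemma linext_Dpath_PA:
  assumes "x \<in> pathalg V E src tgt"
  shows "linext (Dpath r qs) (x :: ('v,'e) qpath \<Rightarrow> 'k::field) \<in> pathalg V E src tgt"
  unfolding linext_def
proof (rule pathalg_sum)
  show "finite {p. x p \<noteq> 0}" using assms by (simp add: pathalg_def)
  show "\<forall>p\<in>{p. x p \<noteq> 0}. (Dpath r qs p :: ('v,'e) qpath \<Rightarrow> 'k) \<in> pathalg V E src tgt"
  proof
    fix p assume "p \<in> {p. x p \<noteq> 0}"
    then have "pvalid V E src tgt p" using assms unfolding pathalg_def by blast
    then show "(Dpath r qs p :: ('v,'e) qpath \<Rightarrow> 'k) \<in> pathalg V E src tgt" by (rule Dpath_PA)
  qed
qed

lemma Dpath_H:
  assumes a: "pvalid V E src tgt a" and b: "pvalid V E src tgt b"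
  shows "linext (Dpath r qs) (pmult tgt (delta a) (delta b)) =
    (\<lambda>p. pmult tgt (Dpath r qs a) (delta b) p + pmult tgt (delta a) (Dpath r qs b) p :: 'k::field)"
proof -
  obtain v as where av: "a = (v, as)" by (cases a)
  obtain w bs where bw: "b = (w, bs)" by (cases b)
  have va: "pvalid_aux V E src tgt v as" using a av by (simp add: pvalid_def)
  let ?Ia = "{i. i < length as \<and> as ! i = r}" and ?Ib = "{j. j < length bs \<and> bs ! j = r}"
  have L1: "pmult tgt (Dpath r qs (v, as)) (delta (w, bs)) = (\<lambda>p.
      \<Sum>i\<in>?Ia. if pend_aux tgt v as = w then delta (v, modp qs as i @ bs) p else (0::'k))"
    unfolding Dpath_def fst_conv snd_conv pmult_sum_left'
    apply (rule ext, rule sum.cong, simp)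
    apply (subst pmult_delta)
    apply (simp add: pend_modp[OF va _ _ hp])
    done
  have L2: "pmult tgt (delta (v, as)) (Dpath r qs (w, bs)) = (\<lambda>p.
      \<Sum>j\<in>?Ib. if pend_aux tgt v as = w then delta (v, as @ modp qs bs j) p else (0::'k))"
    unfolding Dpath_def fst_conv snd_conv pmult_sum_right'
    apply (rule ext, rule sum.cong, simp)
    apply (subst pmult_delta)
    apply simp
    done
  show ?thesis
  proof (cases "pend_aux tgt v as = w")
    case True
    then show ?thesis unfolding av bw L1 L2
      by (simp add: pmult_delta linext_delta Dpath_append)
  next
    case False
    then show ?thesis unfolding av bw L1 L2
      by (simp add: pmult_delta linext_zero)
  qed
qed

end

context setting begin

lemma B2_props:
  assumes "(r, q) \<in> B2 E src tgt Q"
  shows "r \<in> E" "q \<in> Q" "fst q = src r" "pend_aux tgt (src r) (snd q) = tgt r"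
    "pvalid_aux V E src tgt (src r) (snd q)"
proof -
  show r: "r \<in> E" and q: "q \<in> Q" using assms by (auto simp: B2_def)
  show f: "fst q = src r" using assms by (auto simp: B2_def pstart_def)
  show "pend_aux tgt (src r) (snd q) = tgt r" using assms f by (auto simp: B2_def pend_def)
  show "pvalid_aux V E src tgt (src r) (snd q)" using Q_valid[OF q] f by (simp add: pvalid_def)
qed

lemma Dop_diff:
  assumes rq: "(r, q) \<in> B2 E src tgt Q"
  shows "is_diff_op V E src tgt I (Dop V E src tgt r q)"
proof -
  note bp = B2_props[OF rq]
  note PAl = linext_Dpath_PA[OF bp(5) bp(4)]
  note Hl = Dpath_H[OF bp(5) bp(4)]
  show ?thesis
    unfolding is_diff_op_dm dm_def
  proof (intro conjI ballI allI impI)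
    fix x :: "('v,'e) qpath \<Rightarrow> 'k" assume "x \<notin> PA"
    then show "Dop V E src tgt r q x = (\<lambda>_. 0)" by (simp add: Dop_def)
  next
    fix x :: "('v,'e) qpath \<Rightarrow> 'k" assume "x \<in> PA"
    then show "Dop V E src tgt r q x \<in> PA" by (simp add: Dop_def PAl)
  next
    fix x y :: "('v,'e) qpath \<Rightarrow> 'k" and a b :: 'k assume x: "x \<in> PA" and y: "y \<in> PA"
    have xy: "(\<lambda>q. a * x q + b * y q) \<in> PA" by (rule pathalg_lin[OF x y])
    have fx: "finite {p. x p \<noteq> 0}" and fy: "finite {p. y p \<noteq> 0}" using x y by (auto simp: pathalg_def)
    have "(\<lambda>p. Dop V E src tgt r q (\<lambda>q. a * x q + b * y q) p -
        (a * Dop V E src tgt r q x p + b * Dop V E src tgt r q y p)) = (\<lambda>_. 0)"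
      using x y xy by (simp add: Dop_def linext_lin[OF fx fy])
    then show "(\<lambda>p. Dop V E src tgt r q (\<lambda>q. a * x q + b * y q) p -
        (a * Dop V E src tgt r q x p + b * Dop V E src tgt r q y p)) \<in> I"
      by (simp add: I_zero)
  next
    fix x y :: "('v,'e) qpath \<Rightarrow> 'k" assume x: "x \<in> PA" and y: "y \<in> PA"
    have xy: "pmult tgt x y \<in> PA" by (rule pmult_pathalg[OF x y])
    have fx: "finite {p. x p \<noteq> 0}" and fy: "finite {p. y p \<noteq> 0}" using x y by (auto simp: pathalg_def)
    have H: "\<forall>a\<in>{p. x p \<noteq> 0}. \<forall>b\<in>{p. y p \<noteq> 0}. linext (Dpath r (snd q)) (pmult tgt (delta a) (delta b)) =
      (\<lambda>p. pmult tgt (Dpath r (snd q) a) (delta b) p + pmult tgt (delta a) (Dpath r (snd q) b) p :: 'k)"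
      using x y by (auto simp: pathalg_def intro!: Hl)
    have "(\<lambda>p. Dop V E src tgt r q (pmult tgt x y) p - (pmult tgt (Dop V E src tgt r q x) y p +
        pmult tgt x (Dop V E src tgt r q y) p)) = (\<lambda>_. 0)"
      using x y xy by (simp add: Dop_def linext_leibniz[OF fx fy H])
    then show "(\<lambda>p. Dop V E src tgt r q (pmult tgt x y) p - (pmult tgt (Dop V E src tgt r q x) y p +
        pmult tgt x (Dop V E src tgt r q y) p)) \<in> I"
      by (simp add: I_zero)
  qed
qed

lemma Dop_vtx:
  assumes "v \<in> V"
  shows "Dop V E src tgt r q (delta (v, [])) = (\<lambda>_. 0::'k)"
  using vtx_PA[OF assms] by (simp add: Dop_def linext_delta Dpath_def)

lemma Dop_arr:
  assumes rq: "(r, q) \<in> B2 E src tgt Q" and a: "a \<in> E"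
  shows "Dop V E src tgt r q (delta (src a, [a])) = (if a = r then delta q else (\<lambda>_. 0::'k))"
proof -
  note bp = B2_props[OF rq]
  have "delta (src a, [a]) \<in> (PA :: (('v,'e) qpath \<Rightarrow> 'k) set)"
    using a ends by (intro delta_pathalg) (auto simp: pvalid_def)
  then have "Dop V E src tgt r q (delta (src a, [a])) = (Dpath r (snd q) (src a, [a]) :: _ \<Rightarrow> 'k)"
    by (simp add: Dop_def linext_delta)
  moreover have "{i. i < length [a] \<and> [a] ! i = r} = (if a = r then {0} else {})" by auto
  ultimately show ?thesis using bp(3)
    by (cases q) (auto simp: Dpath_def modp_def)
qed

end


lemma crossing:
  assumes "u \<in> A" "w \<notin> A" "(u, w) \<in> (\<Union>a\<in>E. {(src a, tgt a), (tgt a, src a)})\<^sup>*"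
  shows "\<exists>a\<in>E. (src a \<in> A \<and> tgt a \<notin> A) \<or> (tgt a \<in> A \<and> src a \<notin> A)"
proof -
  have "y \<in> A \<or> (\<exists>a\<in>E. (src a \<in> A \<and> tgt a \<notin> A) \<or> (tgt a \<in> A \<and> src a \<notin> A))"
    if "(u, y) \<in> (\<Union>a\<in>E. {(src a, tgt a), (tgt a, src a)})\<^sup>*" for y
    using that
  proof (induction rule: rtrancl_induct)
    case base then show ?case using assms by simp
  next
    case (step y z)
    then obtain a where "a \<in> E" "(y, z) = (src a, tgt a) \<or> (y, z) = (tgt a, src a)" by auto
    then show ?case using step.IH by blast
  qed
  then show ?thesis using assms by blast
qed

lemma exists_order:
  assumes finV: "finite V" and conn: "quiver_connected V E src tgt"
    and ends: "\<forall>a\<in>E. src a \<in> V \<and> tgt a \<in> V"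
  shows "\<exists>vs bs. vs ` {..<card V} = V \<and> inj_on vs {..<card V} \<and>
    (\<forall>i\<in>{1..<card V}. bs i \<in> E \<and> (\<exists>j<i. (src (bs i) = vs i \<and> tgt (bs i) = vs j) \<or>
        (src (bs i) = vs j \<and> tgt (bs i) = vs i)))"
proof -
  let ?n = "card V"
  have ne: "V \<noteq> {}" using conn by (simp add: quiver_connected_def)
  have rel: "\<forall>u\<in>V. \<forall>v\<in>V. (u, v) \<in> (\<Union>a\<in>E. {(src a, tgt a), (tgt a, src a)})\<^sup>*"
    using conn by (simp add: quiver_connected_def)
  have main: "\<exists>vs bs. vs ` {..<k} \<subseteq> V \<and> inj_on vs {..<k} \<and>
    (\<forall>i\<in>{1..<k}. bs i \<in> E \<and> (\<exists>j<i. (src (bs i) = vs i \<and> tgt (bs i) = vs j) \<or>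
        (src (bs i) = vs j \<and> tgt (bs i) = vs i)))" if "1 \<le> k" "k \<le> ?n" for k
    using that
  proof (induction k)
    case 0 then show ?case by simp
  next
    case (Suc k)
    show ?case
    proof (cases "k = 0")
      case True
      obtain v0 where "v0 \<in> V" using ne by blast
      then show ?thesis using True
        by (intro exI[of _ "\<lambda>_. v0"] exI[of _ "\<lambda>_. undefined"]) (auto simp: inj_on_def lessThan_Suc)
    next
      case False
      then obtain vs bs where IH: "vs ` {..<k} \<subseteq> V" "inj_on vs {..<k}"
        "\<forall>i\<in>{1..<k}. bs i \<in> E \<and> (\<exists>j<i. (src (bs i) = vs i \<and> tgt (bs i) = vs j) \<or>
        (src (bs i) = vs j \<and> tgt (bs i) = vs i))"
        using Suc by auto
      let ?A = "vs ` {..<k}"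
      have cA: "card ?A = k" using IH(2) by (simp add: card_image)
      have "?A \<noteq> V" using cA Suc.prems by auto
      then obtain w where w: "w \<in> V" "w \<notin> ?A" using IH(1) by blast
      have u: "vs 0 \<in> ?A" "vs 0 \<in> V" using False IH(1) by auto
      have "(vs 0, w) \<in> (\<Union>a\<in>E. {(src a, tgt a), (tgt a, src a)})\<^sup>*"
        using rel u(2) w(1) by blast
      from crossing[OF u(1) w(2) this]
      obtain a where a: "a \<in> E" "(src a \<in> ?A \<and> tgt a \<notin> ?A) \<or> (tgt a \<in> ?A \<and> src a \<notin> ?A)"
        by blast
      define x where "x = (if src a \<in> ?A then tgt a else src a)"
      define y where "y = (if src a \<in> ?A then src a else tgt a)"
      have x: "x \<in> V" "x \<notin> ?A" using a ends by (auto simp: x_def)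
      have y: "y \<in> ?A" using a by (auto simp: y_def)
      then obtain j where j: "j < k" "y = vs j" by auto
      have xy: "(src a = x \<and> tgt a = y) \<or> (src a = y \<and> tgt a = x)" by (auto simp: x_def y_def)
      let ?vs = "vs(k := x)" and ?bs = "bs(k := a)"
      have img: "?vs ` {..<Suc k} = insert x ?A"
        by (auto simp: lessThan_Suc image_iff)
      show ?thesis
      proof (intro exI conjI)
        show "?vs ` {..<Suc k} \<subseteq> V" using img IH(1) x by auto
        show "inj_on ?vs {..<Suc k}"
          using IH(2) x(2) by (auto simp: inj_on_def lessThan_Suc)
        show "\<forall>i\<in>{1..<Suc k}. ?bs i \<in> E \<and> (\<exists>j<i. (src (?bs i) = ?vs i \<and> tgt (?bs i) = ?vs j) \<or>
          (src (?bs i) = ?vs j \<and> tgt (?bs i) = ?vs i))"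
        proof
          fix i assume i: "i \<in> {1..<Suc k}"
          show "?bs i \<in> E \<and> (\<exists>j<i. (src (?bs i) = ?vs i \<and> tgt (?bs i) = ?vs j) \<or>
            (src (?bs i) = ?vs j \<and> tgt (?bs i) = ?vs i))"
          proof (cases "i = k")
            case True
            then show ?thesis using a(1) j xy by (intro conjI, simp, intro exI[of _ j]) auto
          next
            case False
            then have ik: "i \<in> {1..<k}" using i by auto
            then obtain j' where "j' < i" "(src (bs i) = vs i \<and> tgt (bs i) = vs j') \<or>
              (src (bs i) = vs j' \<and> tgt (bs i) = vs i)" "bs i \<in> E" using IH(3) by blast
            then show ?thesis using False ik by (intro conjI, simp, intro exI[of _ j']) auto
          qed
        qed
      qed
    qed
  qed
  have "1 \<le> ?n" using ne finV by (simp add: Suc_leI card_gt_0_iff)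
  then obtain vs bs where vb: "vs ` {..<?n} \<subseteq> V" "inj_on vs {..<?n}"
    "\<forall>i\<in>{1..<?n}. bs i \<in> E \<and> (\<exists>j<i. (src (bs i) = vs i \<and> tgt (bs i) = vs j) \<or>
        (src (bs i) = vs j \<and> tgt (bs i) = vs i))"
    using main by blast
  have "card (vs ` {..<?n}) = ?n" using vb(2) by (simp add: card_image)
  then have "vs ` {..<?n} = V" using vb(1) finV by (simp add: card_subset_eq)
  then show ?thesis using vb by blast
qed


context idl begin

lemma dm_zero_op: "dm V E src tgt I (\<lambda>x p. 0)"
proof -
  have "adj tgt (\<lambda>_. 0) = (\<lambda>x p. 0 :: 'k)"
    by (rule ext) (simp add: adj_def pmult_zero_left pmult_zero_right)
  then show ?thesis using dm_adj[OF pathalg_zero] by simp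
qed

lemma dm_sum:
  assumes "finite F" "\<forall>i\<in>F. dm V E src tgt I (Df i)"
  shows "dm V E src tgt I (\<lambda>x p. \<Sum>i\<in>F. w i * Df i x p)"
  using assms
proof (induction F rule: finite_induct)
  case empty then show ?case using dm_zero_op by simp
next
  case (insert i F)
  have "dm V E src tgt I (\<lambda>x p. 1 * (\<Sum>i\<in>F. w i * Df i x p) + w i * Df i x p)"
    using insert by (intro dm_lin) auto
  moreover have "(\<lambda>x p. 1 * (\<Sum>i\<in>F. w i * Df i x p) + w i * Df i x p) =
     (\<lambda>x p. \<Sum>i\<in>insert i F. w i * Df i x p)"
    using insert by (simp add: add.commute)
  ultimately show ?case by simp
qed

end

context setting begin

abbreviation Dv :: "'e \<times> ('v,'e) qpath \<Rightarrow> (('v,'e) qpath \<Rightarrow> 'k) \<Rightarrow> (('v,'e) qpath \<Rightarrow> 'k)" where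
  "Dv s \<equiv> Dop V E src tgt (fst s) (snd s)"

definition Lc :: "('e \<times> ('v,'e) qpath) set \<Rightarrow> ('e \<times> ('v,'e) qpath \<Rightarrow> 'k) \<Rightarrow>
    (('v,'e) qpath \<Rightarrow> 'k) \<Rightarrow> (('v,'e) qpath \<Rightarrow> 'k)" where
  "Lc Sp c = (\<lambda>x p. \<Sum>s\<in>Sp. c s * Dv s x p)"

definition Pc :: "('e \<times> ('v,'e) qpath) set \<Rightarrow> ((('v,'e) qpath \<Rightarrow> 'k) \<Rightarrow> (('v,'e) qpath \<Rightarrow> 'k)) \<Rightarrow> bool" where
  "Pc Sp D \<longleftrightarrow> (\<exists>c m. m \<in> PA \<and> (\<forall>x\<in>PA. (\<lambda>p. D x p - Lc Sp c x p - adj tgt m x p) \<in> I))"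

lemma Pc_lin:
  assumes "Pc Sp D1" "Pc Sp D2"
  shows "Pc Sp (\<lambda>x p. a * D1 x p + b * D2 x p)"
proof -
  obtain c1 m1 where 1: "m1 \<in> PA" "\<forall>x\<in>PA. (\<lambda>p. D1 x p - Lc Sp c1 x p - adj tgt m1 x p) \<in> I"
    using assms(1) by (auto simp: Pc_def)
  obtain c2 m2 where 2: "m2 \<in> PA" "\<forall>x\<in>PA. (\<lambda>p. D2 x p - Lc Sp c2 x p - adj tgt m2 x p) \<in> I"
    using assms(2) by (auto simp: Pc_def)
  show ?thesis unfolding Pc_def
  proof (intro exI conjI ballI)
    show "(\<lambda>p. a * m1 p + b * m2 p) \<in> PA" by (rule pathalg_lin[OF 1(1) 2(1)])
  next
    fix x :: "('v,'e) qpath \<Rightarrow> 'k" assume x: "x \<in> PA"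
    have "(\<lambda>p. a * (D1 x p - Lc Sp c1 x p - adj tgt m1 x p) + b * (D2 x p - Lc Sp c2 x p - adj tgt m2 x p)) \<in> I"
      using 1(2) 2(2) x by (intro I_lin) auto
    moreover have "(\<lambda>p. a * (D1 x p - Lc Sp c1 x p - adj tgt m1 x p) + b * (D2 x p - Lc Sp c2 x p - adj tgt m2 x p)) =
      (\<lambda>p. (a * D1 x p + b * D2 x p) - Lc Sp (\<lambda>s. a * c1 s + b * c2 s) x p - adj tgt (\<lambda>p. a * m1 p + b * m2 p) x p)"
      by (rule ext) (simp add: Lc_def adj_lin_m sum.distrib sum_distrib_left algebra_simps)
    ultimately show "(\<lambda>p. (a * D1 x p + b * D2 x p) - Lc Sp (\<lambda>s. a * c1 s + b * c2 s) x p - adj tgt (\<lambda>p. a * m1 p + b * m2 p) x p) \<in> I"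
      by simp
  qed
qed

lemma Pc_adj: "m \<in> PA \<Longrightarrow> Pc Sp (adj tgt m)"
  unfolding Pc_def by (intro exI[of _ "\<lambda>_. 0"] exI[of _ m]) (simp add: Lc_def I_zero)

lemma Pc_gen: "finite Sp \<Longrightarrow> s \<in> Sp \<Longrightarrow> Pc Sp (Dv s)"
proof -
  assume f: "finite Sp" and s: "s \<in> Sp"
  have e: "(\<Sum>t\<in>Sp. (if t = s then 1 else 0) * Dv t x p) = Dv s x p" for x p
  proof -
    have "(\<Sum>t\<in>Sp. (if t = s then 1 else 0) * Dv t x p) = (\<Sum>t\<in>Sp. if t = s then Dv t x p else 0)"
      by (rule sum.cong) auto
    then show ?thesis using f s by simp
  qed
  have "Lc Sp (\<lambda>t. if t = s then 1 else 0) = Dv s"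
    unfolding Lc_def by (intro ext) (rule e)
  then show ?thesis unfolding Pc_def
    by (intro exI[of _ "\<lambda>t. if t = s then 1 else 0"] exI[of _ "\<lambda>_. 0"])
       (simp add: pathalg_zero adj_def pmult_zero_left pmult_zero_right I_zero)
qed

lemma Pc_cong:
  assumes "Pc Sp D" "\<forall>x\<in>PA. (\<lambda>p. D x p - D' x p) \<in> I"
  shows "Pc Sp D'"
proof -
  obtain c m where 1: "m \<in> PA" "\<forall>x\<in>PA. (\<lambda>p. D x p - Lc Sp c x p - adj tgt m x p) \<in> I"
    using assms(1) by (auto simp: Pc_def)
  show ?thesis unfolding Pc_def
  proof (intro exI conjI ballI)
    show "m \<in> PA" by (rule 1(1))
  next
    fix x :: "('v,'e) qpath \<Rightarrow> 'k" assume x: "x \<in> PA"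
    have "(\<lambda>p. (D x p - Lc Sp c x p - adj tgt m x p) - (D x p - D' x p)) \<in> I"
      using I_diff[of "\<lambda>p. D x p - Lc Sp c x p - adj tgt m x p" "\<lambda>p. D x p - D' x p"] 1(2) assms(2) x
      by simp
    then show "(\<lambda>p. D' x p - Lc Sp c x p - adj tgt m x p) \<in> I" by (simp add: algebra_simps)
  qed
qed

lemma Pc_ext: "Pc Sp D \<Longrightarrow> (\<forall>x\<in>PA. D x = D' x) \<Longrightarrow> Pc Sp D'"
  by (erule Pc_cong) (simp add: I_zero)

lemma Pc_zero: "Pc Sp (\<lambda>x p. 0)"
proof -
  have "Pc Sp (adj tgt (\<lambda>_. 0))" by (rule Pc_adj[OF pathalg_zero])
  moreover have "adj tgt (\<lambda>_. 0) = (\<lambda>x p. 0 :: 'k)"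
    by (rule ext) (simp add: adj_def pmult_zero_left pmult_zero_right)
  ultimately show ?thesis by simp
qed

lemma Pc_sum:
  assumes "finite F" "\<forall>i\<in>F. Pc Sp (Df i)"
  shows "Pc Sp (\<lambda>x p. \<Sum>i\<in>F. w i * Df i x p)"
  using assms
proof (induction F rule: finite_induct)
  case empty then show ?case using Pc_zero by simp
next
  case (insert i F)
  have "Pc Sp (\<lambda>x p. 1 * (\<Sum>i\<in>F. w i * Df i x p) + w i * Df i x p)"
    using insert by (intro Pc_lin) auto
  moreover have "(\<lambda>x p. 1 * (\<Sum>i\<in>F. w i * Df i x p) + w i * Df i x p) =
     (\<lambda>x p. \<Sum>i\<in>insert i F. w i * Df i x p)"
    using insert by (simp add: add.commute)
  ultimately show ?case by simp
qed

end


context setting begin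

lemma B2_fin: "finite (B2 E src tgt Q)"
proof -
  have "B2 E src tgt Q \<subseteq> E \<times> Q" by (auto simp: B2_def)
  then show ?thesis using finE Q_fin by (meson finite_SigmaI finite_subset)
qed

lemma arr_PA: "a \<in> E \<Longrightarrow> delta (src a, [a]) \<in> PA"
  using ends by (intro delta_pathalg) (auto simp: pvalid_def)

lemma dm_Dv: "s \<in> B2 E src tgt Q \<Longrightarrow> dm V E src tgt I (Dv s)"
  using Dop_diff[of "fst s" "snd s"] by (simp add: is_diff_op_dm)

lemma D1_vertex:
  assumes dmD: "dm V E src tgt I D" and w: "w \<in> V"
    and m0: "m0 = (\<lambda>p. \<Sum>w\<in>V. pmult tgt (D (delta (w, []))) (delta (w, [])) p)"
  shows "(\<lambda>p. 1 * D (delta (w, [])) p + (-1) * adj tgt m0 (delta (w, [])) p) \<in> I"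
proof -
  define d where "d w = D (delta (w, []))" for w
  let ?ew = "delta (w, []) :: ('v,'e) qpath \<Rightarrow> 'k"
  have dPA: "v \<in> V \<Longrightarrow> d v \<in> PA" for v unfolding d_def by (intro dm_PA[OF dmD] vtx_PA)
  have dval: "d v (u, zs) \<noteq> 0 \<Longrightarrow> pend_aux tgt u zs \<in> V" if "v \<in> V" for v u zs
    using dPA[OF that] by (auto simp: pathalg_def pvalid_def intro: pvalid_aux_end)
  have m0_pt: "m0 (u, zs) = (if pend_aux tgt u zs \<in> V then d (pend_aux tgt u zs) (u, zs) else 0)" for u zs
  proof -
    have "m0 (u, zs) = (\<Sum>v\<in>V. if pend_aux tgt u zs = v then d v (u, zs) else 0)"
      unfolding m0 d_def by (simp add: pmult_vtx_right)
    also have "\<dots> = (\<Sum>v\<in>V. if v = pend_aux tgt u zs then d (pend_aux tgt u zs) (u, zs) else 0)"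
      by (rule sum.cong) auto
    finally show ?thesis using finV by simp
  qed
  define Xa where "Xa v = pmult tgt (\<lambda>p. pmult tgt (d w) (delta (v, [])) p + pmult tgt ?ew (d v) p) (delta (v, []))" for v
  have XaI: "Xa v \<in> I" if v: "v \<in> V - {w}" for v
  proof -
    have vV: "v \<in> V" using v by simp
    have l: "(\<lambda>p. D (pmult tgt ?ew (delta (v, []))) p - (pmult tgt (d w) (delta (v, [])) p + pmult tgt ?ew (d v) p)) \<in> I"
      unfolding d_def by (rule dm_leibD[OF dmD vtx_PA[OF w] vtx_PA[OF vV]])
    have z: "pmult tgt ?ew (delta (v, [])) = (\<lambda>_. 0)" using v by (auto simp: pmult_delta)
    have "(\<lambda>p. D (\<lambda>_. 0) p - (D (\<lambda>_. 0) p - (pmult tgt (d w) (delta (v, [])) p + pmult tgt ?ew (d v) p))) \<in> I"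
      using I_diff[OF dm_zero[OF dmD] l[unfolded z]] by simp
    then have "(\<lambda>p. pmult tgt (d w) (delta (v, [])) p + pmult tgt ?ew (d v) p) \<in> I" by simp
    then show ?thesis unfolding Xa_def by (rule I_rmult[OF vtx_PA[OF vV]])
  qed
  have Xa_pt: "Xa v (u, zs) = (if pend_aux tgt u zs = v then d w (u, zs) + (if u = w then d v (u, zs) else 0) else 0)" for v u zs
    unfolding Xa_def by (simp add: pmult_vtx_right pmult_vtx_left)
  define Xb where "Xb = pmult tgt (pmult tgt ?ew (\<lambda>p. d w p - (pmult tgt (d w) ?ew p + pmult tgt ?ew (d w) p))) ?ew"
  have XbI: "Xb \<in> I"
  proof -
    have l: "(\<lambda>p. D (pmult tgt ?ew ?ew) p - (pmult tgt (d w) ?ew p + pmult tgt ?ew (d w) p)) \<in> I"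
      unfolding d_def by (rule dm_leibD[OF dmD vtx_PA[OF w] vtx_PA[OF w]])
    have z: "pmult tgt ?ew ?ew = ?ew" by (simp add: pmult_delta)
    have "(\<lambda>p. d w p - (pmult tgt (d w) ?ew p + pmult tgt ?ew (d w) p)) \<in> I"
      using l unfolding z d_def .
    then show ?thesis unfolding Xb_def by (intro I_rmult I_lmult vtx_PA w)
  qed
  have Xb_pt: "Xb (u, zs) = (if u = w \<and> pend_aux tgt u zs = w then - d w (u, zs) else 0)" for u zs
    unfolding Xb_def by (simp add: sandwich_pt pmult_vtx_right pmult_vtx_left)
  have fin: "finite (V - {w})" using finV by simp
  have XI: "(\<lambda>p. (\<Sum>v\<in>V - {w}. Xa v p) - Xb p) \<in> I"
    by (rule I_diff[OF I_sum'[OF fin] XbI]) (use XaI in blast)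
  have eq: "(\<lambda>p. 1 * D ?ew p + (-1) * adj tgt m0 ?ew p) = (\<lambda>p. (\<Sum>v\<in>V - {w}. Xa v p) - Xb p)"
  proof (rule ext)
    fix p :: "('v,'e) qpath"
    obtain u zs where p: "p = (u, zs)" by (cases p)
    let ?P = "pend_aux tgt u zs"
    have s: "(\<Sum>v\<in>V - {w}. Xa v (u, zs)) =
       (if ?P \<in> V - {w} then d w (u, zs) + (if u = w then d ?P (u, zs) else 0) else 0)"
    proof -
      have "(\<Sum>v\<in>V - {w}. Xa v (u, zs)) =
        (\<Sum>v\<in>V - {w}. if v = ?P then d w (u, zs) + (if u = w then d ?P (u, zs) else 0) else 0)"
        by (rule sum.cong) (auto simp: Xa_pt)
      then show ?thesis using fin by simp
    qed
    have dw: "d w (u, zs) \<noteq> 0 \<Longrightarrow> ?P \<in> V" using dval[OF w] .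
    show "1 * D ?ew p + (-1) * adj tgt m0 ?ew p = (\<Sum>v\<in>V - {w}. Xa v p) - Xb p"
      unfolding p s Xb_pt adj_def
      using dw w by (auto simp: pmult_vtx_right pmult_vtx_left m0_pt d_def)
  qed
  show ?thesis using XI unfolding eq .
qed

lemma D1_arrow:
  assumes dm1: "dm V E src tgt I D1" and hv: "\<forall>v\<in>V. D1 (delta (v, [])) \<in> I" and a: "a \<in> E"
  shows "\<exists>f. Qfun f \<and> (\<lambda>p. D1 (delta (src a, [a])) p - f p) \<in> I \<and>
     (\<forall>p. f p \<noteq> 0 \<longrightarrow> fst p = src a \<and> pend tgt p = tgt a)"
proof -
  let ?ar = "delta (src a, [a]) :: ('v,'e) qpath \<Rightarrow> 'k"
  let ?es = "delta (src a, []) :: ('v,'e) qpath \<Rightarrow> 'k"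
  let ?et = "delta (tgt a, []) :: ('v,'e) qpath \<Rightarrow> 'k"
  have sV: "src a \<in> V" and tV: "tgt a \<in> V" using ends a by auto
  have arPA: "?ar \<in> PA" by (rule arr_PA[OF a])
  have esPA: "?es \<in> PA" and etPA: "?et \<in> PA" using vtx_PA sV tV by auto
  have h1: "pmult tgt ?es ?ar = ?ar" by (simp add: pmult_delta)
  have h2: "pmult tgt ?ar ?et = ?ar" by (simp add: pmult_delta)
  have D1ar: "D1 ?ar \<in> PA" by (rule dm_PA[OF dm1 arPA])
  have L1: "(\<lambda>p. D1 ?ar p - (pmult tgt (D1 ?es) ?ar p + pmult tgt ?es (D1 ?ar) p)) \<in> I"
    using dm_leibD[OF dm1 esPA arPA] unfolding h1 .
  have L1b: "pmult tgt (D1 ?es) ?ar \<in> I" using hv sV by (intro I_rmult arPA) auto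
  have c1: "(\<lambda>p. D1 ?ar p - pmult tgt ?es (D1 ?ar) p) \<in> I"
    using I_add[OF L1 L1b] by (simp add: algebra_simps)
  have L2: "(\<lambda>p. D1 ?ar p - (pmult tgt (D1 ?ar) ?et p + pmult tgt ?ar (D1 ?et) p)) \<in> I"
    using dm_leibD[OF dm1 arPA etPA] unfolding h2 .
  have L2b: "pmult tgt ?ar (D1 ?et) \<in> I" using hv tV by (intro I_lmult arPA) auto
  have c2: "(\<lambda>p. D1 ?ar p - pmult tgt (D1 ?ar) ?et p) \<in> I"
    using I_add[OF L2 L2b] by (simp add: algebra_simps)
  have c3: "(\<lambda>p. pmult tgt ?es (D1 ?ar) p - pmult tgt ?es (pmult tgt (D1 ?ar) ?et) p) \<in> I"
    by (rule cong_lmult[OF esPA c2])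
  have c4: "(\<lambda>p. D1 ?ar p - pmult tgt ?es (pmult tgt (D1 ?ar) ?et) p) \<in> I"
    by (rule cong_trans[OF c1 c3])
  obtain g where g: "Qfun g" "(\<lambda>p. D1 ?ar p - g p) \<in> I" using Q_span[OF D1ar] by blast
  have c5: "(\<lambda>p. pmult tgt ?es (pmult tgt (D1 ?ar) ?et) p - pmult tgt ?es (pmult tgt g ?et) p) \<in> I"
    by (rule cong_lmult[OF esPA cong_rmult[OF etPA g(2)]])
  have c6: "(\<lambda>p. D1 ?ar p - pmult tgt ?es (pmult tgt g ?et) p) \<in> I"
    by (rule cong_trans[OF c4 c5])
  define f where "f = (\<lambda>p. if fst p = src a \<and> pend tgt p = tgt a then g p else 0)"
  have "pmult tgt ?es (pmult tgt g ?et) = f"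
    unfolding f_def pmult_assoc by (rule sandwich)
  then have c7: "(\<lambda>p. D1 ?ar p - f p) \<in> I" using c6 by simp
  have "Qfun (\<lambda>p. (if fst p = src a \<and> pend tgt p = tgt a then 1 else 0) * g p)" by (rule Qfun_mult[OF g(1)])
  moreover have "(\<lambda>p. (if fst p = src a \<and> pend tgt p = tgt a then 1 else 0) * g p) = f"
    by (rule ext) (simp add: f_def)
  ultimately have "Qfun f" by simp
  moreover have "\<forall>p. f p \<noteq> 0 \<longrightarrow> fst p = src a \<and> pend tgt p = tgt a" by (simp add: f_def)
  ultimately show ?thesis using c7 by blast
qed

lemma span_main:
  assumes D: "is_diff_op V E src tgt I D" and gens: "\<forall>s\<in>B2 E src tgt Q. Pc Sp (Dv s)"
  shows "Pc Sp D"
proof -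
  have dmD: "dm V E src tgt I D" using D by (simp add: is_diff_op_dm)
  define m0 where "m0 = (\<lambda>p. \<Sum>w\<in>V. pmult tgt (D (delta (w, []))) (delta (w, [])) p)"
  have m0PA: "m0 \<in> PA" unfolding m0_def
    by (rule pathalg_sum'[OF finV]) (auto intro!: pmult_pathalg dm_PA[OF dmD] vtx_PA)
  define D1 where "D1 = (\<lambda>x p. 1 * D x p + (-1) * adj tgt m0 x p)"
  have dm1: "dm V E src tgt I D1" unfolding D1_def by (rule dm_lin[OF dmD dm_adj[OF m0PA]])
  have hv: "\<forall>v\<in>V. D1 (delta (v, [])) \<in> I"
    unfolding D1_def using D1_vertex[OF dmD _ m0_def] by blast
  have "\<forall>a\<in>E. \<exists>f. Qfun f \<and> (\<lambda>p. D1 (delta (src a, [a])) p - f p) \<in> I \<and>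
     (\<forall>p. f p \<noteq> 0 \<longrightarrow> fst p = src a \<and> pend tgt p = tgt a)"
    using D1_arrow[OF dm1 hv] by blast
  then obtain F where F: "\<forall>a\<in>E. Qfun (F a) \<and> (\<lambda>p. D1 (delta (src a, [a])) p - F a p) \<in> I \<and>
     (\<forall>p. F a p \<noteq> 0 \<longrightarrow> fst p = src a \<and> pend tgt p = tgt a)"
    by (rule bchoice[elim_format]) blast
  define Lf where "Lf = (\<lambda>x p. \<Sum>s\<in>B2 E src tgt Q. F (fst s) (snd s) * Dv s x p)"
  have dmLf: "dm V E src tgt I Lf" unfolding Lf_def
    by (rule dm_sum[OF B2_fin]) (use dm_Dv in blast)
  define Del where "Del = (\<lambda>x p. 1 * D1 x p + (-1) * Lf x p)"
  have dmDel: "dm V E src tgt I Del" unfolding Del_def by (rule dm_lin[OF dm1 dmLf])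
  have Lf_v: "Lf (delta (v, [])) = (\<lambda>_. 0)" if "v \<in> V" for v
    unfolding Lf_def using Dop_vtx[OF that] by simp
  have Lf_a: "Lf (delta (src b, [b])) = F b" if b: "b \<in> E" for b
  proof (rule ext)
    fix p :: "('v,'e) qpath"
    have "Lf (delta (src b, [b])) p = (\<Sum>s\<in>B2 E src tgt Q. if s = (b, p) then F b p else 0)"
      unfolding Lf_def
    proof (rule sum.cong)
      fix s assume s: "s \<in> B2 E src tgt Q"
      then have "(fst s, snd s) \<in> B2 E src tgt Q" by simp
      from Dop_arr[OF this b] show "F (fst s) (snd s) * Dv s (delta (src b, [b])) p =
         (if s = (b, p) then F b p else 0)"
        by (cases s) (auto simp: delta_def)
    qed simp
    also have "\<dots> = (if (b, p) \<in> B2 E src tgt Q then F b p else 0)" using B2_fin by simp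
    also have "\<dots> = F b p"
    proof (cases "F b p = 0")
      case False
      have Fb: "Qfun (F b)" "\<forall>p. F b p \<noteq> 0 \<longrightarrow> fst p = src b \<and> pend tgt p = tgt b"
        using F b by blast+
      have "p \<in> Q" using Fb(1) False unfolding Qfun_def by blast
      moreover have "fst p = src b" "pend tgt p = tgt b" using Fb(2) False by blast+
      ultimately have "(b, p) \<in> B2 E src tgt Q" using b by (simp add: B2_def pstart_def)
      then show ?thesis by simp
    qed simp
    finally show "Lf (delta (src b, [b])) p = F b p" .
  qed
  have DelI: "\<forall>x\<in>PA. Del x \<in> I"
  proof
    fix x :: "('v,'e) qpath \<Rightarrow> 'k" assume x: "x \<in> PA"
    show "Del x \<in> I"
    proof (rule dm_unique[OF dmDel ends _ _ x])
      show "\<forall>v\<in>V. Del (delta (v, [])) \<in> I" using hv Lf_v by (simp add: Del_def)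
      show "\<forall>a\<in>E. Del (delta (src a, [a])) \<in> I" using F Lf_a by (simp add: Del_def)
    qed
  qed
  have PLf: "Pc Sp Lf" unfolding Lf_def by (rule Pc_sum[OF B2_fin gens])
  have PD1: "Pc Sp D1"
  proof (rule Pc_cong[OF PLf], intro ballI)
    fix x :: "('v,'e) qpath \<Rightarrow> 'k" assume "x \<in> PA"
    then have "Del x \<in> I" using DelI by blast
    then have "(\<lambda>p. - Del x p) \<in> I" by (rule I_neg)
    then show "(\<lambda>p. Lf x p - D1 x p) \<in> I" by (simp add: Del_def)
  qed
  have "Pc Sp (\<lambda>x p. 1 * D1 x p + 1 * adj tgt m0 x p)" by (rule Pc_lin[OF PD1 Pc_adj[OF m0PA]])
  then show ?thesis by (rule Pc_ext) (simp add: D1_def)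
qed

end


context setting begin

definition wv :: "'v \<Rightarrow> 'e \<Rightarrow> 'k" where
  "wv v a = (if src a = v then 1 else 0) - (if tgt a = v then 1 else 0)"

lemma arrp_B2: "a \<in> E \<Longrightarrow> (a, (src a, [a])) \<in> B2 E src tgt Q"
  using arr_Q by (auto simp: B2_def pstart_def pend_def)

lemma adj_vtx_W:
  assumes v: "v \<in> V"
  shows "\<forall>x\<in>PA. (\<lambda>p. adj tgt (delta (v, [])) x p -
     (\<Sum>a\<in>E. wv v a * Dop V E src tgt a (src a, [a]) x p)) \<in> I"
proof
  fix x :: "('v,'e) qpath \<Rightarrow> 'k" assume x: "x \<in> PA"
  let ?W = "\<lambda>x p. \<Sum>a\<in>E. wv v a * Dop V E src tgt a (src a, [a]) x p"
  have dmW: "dm V E src tgt I ?W"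
    by (rule dm_sum[OF finE]) (use dm_Dv arrp_B2 in force)
  define Del where "Del = (\<lambda>x p. 1 * adj tgt (delta (v, [])) x p + (-1) * ?W x p)"
  have dmDel: "dm V E src tgt I Del" unfolding Del_def
    by (rule dm_lin[OF dm_adj[OF vtx_PA[OF v]] dmW])
  have "Del x \<in> I"
  proof (rule dm_unique[OF dmDel ends _ _ x])
    show "\<forall>u\<in>V. Del (delta (u, [])) \<in> I"
    proof
      fix u assume u: "u \<in> V"
      have "Del (delta (u, [])) = (\<lambda>_. 0)"
      proof (rule ext)
        fix p :: "('v,'e) qpath"
        obtain u' zs where p: "p = (u', zs)" by (cases p)
        show "Del (delta (u, [])) p = 0"
          unfolding Del_def p adj_def using Dop_vtx[OF u]
          by (simp add: pmult_vtx_left) (simp add: delta_def)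
      qed
      then show "Del (delta (u, [])) \<in> I" by (simp add: I_zero)
    qed
    show "\<forall>b\<in>E. Del (delta (src b, [b])) \<in> I"
    proof
      fix b assume b: "b \<in> E"
      have W: "?W (delta (src b, [b])) p = wv v b * delta (src b, [b]) p" for p
      proof -
        have "?W (delta (src b, [b])) p = (\<Sum>a\<in>E. if a = b then wv v b * delta (src b, [b]) p else 0)"
          by (rule sum.cong) (auto simp: Dop_arr[OF arrp_B2 b])
        then show ?thesis using b finE by simp
      qed
      have "Del (delta (src b, [b])) = (\<lambda>_. 0)"
      proof (rule ext)
        fix p :: "('v,'e) qpath"
        obtain u' zs where p: "p = (u', zs)" by (cases p)
        show "Del (delta (src b, [b])) p = 0"
          unfolding Del_def W unfolding p adj_def
          by (simp add: pmult_vtx_left pmult_vtx_right) (simp add: delta_def wv_def)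
      qed
      then show "Del (delta (src b, [b])) \<in> I" by (simp add: I_zero)
    qed
  qed
  then show "(\<lambda>p. adj tgt (delta (v, [])) x p - ?W x p) \<in> I" by (simp add: Del_def)
qed

lemma tree_gens:
  assumes n: "n = card V" and ord: "vs ` {..<n} = V" "inj_on vs {..<n}"
    "\<forall>i\<in>{1..<n}. bs i \<in> E \<and> (\<exists>j<i. (src (bs i) = vs i \<and> tgt (bs i) = vs j) \<or>
        (src (bs i) = vs j \<and> tgt (bs i) = vs i))"
    and injb: "inj_on bs {1..<n}"
    and Sp: "Sp = B2 E src tgt Q - (\<lambda>a. (a, (src a, [a]))) ` (bs ` {1..<n})"
  shows "\<forall>s\<in>B2 E src tgt Q. Pc Sp (Dv s)"
proof -
  let ?T = "bs ` {1..<n}"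
  let ?Ta = "\<lambda>a. Dop V E src tgt a (src a, [a])"
  have TE: "?T \<subseteq> E" using ord(3) by auto
  have finSp: "finite Sp" using Sp B2_fin by simp
  have PE: "Pc Sp (\<lambda>x p. \<Sum>a\<in>E. wv v a * ?Ta a x p)" if v: "v \<in> V" for v
    by (rule Pc_cong[OF Pc_adj[OF vtx_PA[OF v]] adj_vtx_W[OF v]])
  have PEmT: "Pc Sp (\<lambda>x p. \<Sum>a\<in>E - ?T. wv v a * ?Ta a x p)" for v
  proof (rule Pc_sum)
    show "finite (E - ?T)" using finE by simp
    show "\<forall>a\<in>E - ?T. Pc Sp (?Ta a)"
    proof
      fix a assume a: "a \<in> E - ?T"
      then have "(a, (src a, [a])) \<in> Sp" using Sp arrp_B2 by auto
      from Pc_gen[OF finSp this] show "Pc Sp (?Ta a)" by simp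
    qed
  qed
  have PJ: "Pc Sp (\<lambda>x p. \<Sum>j\<in>{1..<n}. wv v (bs j) * ?Ta (bs j) x p)" if v: "v \<in> V" for v
  proof -
    have "Pc Sp (\<lambda>x p. 1 * (\<Sum>a\<in>E. wv v a * ?Ta a x p) + (-1) * (\<Sum>a\<in>E - ?T. wv v a * ?Ta a x p))"
      by (rule Pc_lin[OF PE[OF v] PEmT])
    moreover have S1: "(\<Sum>a\<in>E. f a) = (\<Sum>a\<in>?T. f a) + (\<Sum>a\<in>E - ?T. f a)" for f :: "'e \<Rightarrow> 'k"
      using sum.subset_diff[OF TE finE, of f] by (simp add: add.commute)
    moreover have S2: "(\<Sum>a\<in>?T. f a) = (\<Sum>j\<in>{1..<n}. f (bs j))" for f :: "'e \<Rightarrow> 'k"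
      using injb by (simp add: sum.reindex)
    ultimately show ?thesis
    proof (elim Pc_ext, intro ballI)
      fix x :: "('v,'e) qpath \<Rightarrow> 'k"
      show "(\<lambda>p. 1 * (\<Sum>a\<in>E. wv v a * ?Ta a x p) + (-1) * (\<Sum>a\<in>E - ?T. wv v a * ?Ta a x p)) =
        (\<lambda>p. \<Sum>j\<in>{1..<n}. wv v (bs j) * ?Ta (bs j) x p)"
      proof (rule ext)
        fix p
        show "1 * (\<Sum>a\<in>E. wv v a * ?Ta a x p) + (-1) * (\<Sum>a\<in>E - ?T. wv v a * ?Ta a x p) =
          (\<Sum>j\<in>{1..<n}. wv v (bs j) * ?Ta (bs j) x p)"
          using S1[of "\<lambda>a. wv v a * ?Ta a x p"] S2[of "\<lambda>a. wv v a * ?Ta a x p"] by simp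
      qed
    qed
  qed
  have vs_ne: "vs i \<noteq> vs j" if "i < n" "j < n" "i \<noteq> j" for i j
    using ord(2) that by (auto simp: inj_on_def)
  have w0: "wv (vs i) (bs j) = 0" if "1 \<le> j" "j < i" "i < n" for i j
  proof -
    have "j \<in> {1..<n}" using that by auto
    then obtain j' where j': "j' < j" "(src (bs j) = vs j \<and> tgt (bs j) = vs j') \<or> (src (bs j) = vs j' \<and> tgt (bs j) = vs j)"
      using ord(3) by blast
    have "vs i \<noteq> vs j" "vs i \<noteq> vs j'" using vs_ne[of i j] vs_ne[of i j'] that j'(1) by auto
    then have "src (bs j) \<noteq> vs i" "tgt (bs j) \<noteq> vs i" using j'(2) by auto
    then show ?thesis by (simp add: wv_def)
  qed
  have w1: "wv (vs i) (bs i) \<noteq> 0" if "1 \<le> i" "i < n" for i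
  proof -
    have "i \<in> {1..<n}" using that by auto
    then obtain j where j: "j < i" "(src (bs i) = vs i \<and> tgt (bs i) = vs j) \<or> (src (bs i) = vs j \<and> tgt (bs i) = vs i)"
      using ord(3) by blast
    have "vs i \<noteq> vs j" using vs_ne[of i j] that j(1) by auto
    then show ?thesis using j(2) by (auto simp: wv_def)
  qed
  have Ptree: "Pc Sp (?Ta (bs i))" if "i \<in> {1..<n}" for i
    using that
  proof (induction "n - i" arbitrary: i rule: less_induct)
    case less
    then have i: "1 \<le> i" "i < n" by auto
    have viV: "vs i \<in> V" using ord(1) i by auto
    let ?w = "wv (vs i) (bs i)"
    have PU: "Pc Sp (\<lambda>x p. \<Sum>j\<in>{i<..<n}. wv (vs i) (bs j) * ?Ta (bs j) x p)"
    proof (rule Pc_sum, simp, intro ballI)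
      fix j assume "j \<in> {i<..<n}"
      then have "n - j < n - i" "j \<in> {1..<n}" using i by auto
      then show "Pc Sp (?Ta (bs j))" by (rule less.hyps)
    qed
    have split: "(\<Sum>j\<in>{1..<n}. f j) = (\<Sum>j\<in>{1..<i}. f j) + f i + (\<Sum>j\<in>{i<..<n}. f j)" for f :: "nat \<Rightarrow> 'k"
    proof -
      have "{1..<n} = {1..<i} \<union> ({i} \<union> {i<..<n})" using i by auto
      moreover have "sum f ({1..<i} \<union> {i<..<n}) = sum f {1..<i} + sum f {i<..<n}"
        by (rule sum.union_disjoint) auto
      ultimately show ?thesis by (simp add: sum.union_disjoint add.assoc)
    qed
    have "Pc Sp (\<lambda>x p. (1 / ?w) * (\<Sum>j\<in>{1..<n}. wv (vs i) (bs j) * ?Ta (bs j) x p)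
         + (- 1 / ?w) * (\<Sum>j\<in>{i<..<n}. wv (vs i) (bs j) * ?Ta (bs j) x p))"
      by (rule Pc_lin[OF PJ[OF viV] PU])
    then show ?case
    proof (rule Pc_ext, intro ballI)
      fix x :: "('v,'e) qpath \<Rightarrow> 'k"
      have z: "(\<Sum>j\<in>{1..<i}. wv (vs i) (bs j) * ?Ta (bs j) x p) = 0" for p
        using w0 i by (auto intro: sum.neutral)
      show "(\<lambda>p. (1 / ?w) * (\<Sum>j\<in>{1..<n}. wv (vs i) (bs j) * ?Ta (bs j) x p)
         + (- 1 / ?w) * (\<Sum>j\<in>{i<..<n}. wv (vs i) (bs j) * ?Ta (bs j) x p)) = ?Ta (bs i) x"
      proof (rule ext)
        fix p
        let ?g = "\<lambda>j. wv (vs i) (bs j) * ?Ta (bs j) x p"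
        have sp: "(\<Sum>j\<in>{1..<n}. ?g j) = ?g i + (\<Sum>j\<in>{i<..<n}. ?g j)"
          using split[of ?g] z[of p] by simp
        show "(1 / ?w) * (\<Sum>j\<in>{1..<n}. ?g j) + (- 1 / ?w) * (\<Sum>j\<in>{i<..<n}. ?g j) = ?Ta (bs i) x p"
          unfolding sp using w1[OF i] by (simp add: field_simps)
      qed
    qed
  qed
  show ?thesis
  proof
    fix s assume s: "s \<in> B2 E src tgt Q"
    show "Pc Sp (Dv s)"
    proof (cases "s \<in> Sp")
      case True then show ?thesis by (rule Pc_gen[OF finSp])
    next
      case False
      then obtain i where i: "i \<in> {1..<n}" "s = (bs i, (src (bs i), [bs i]))" using s Sp by auto
      then show ?thesis using Ptree[OF i(1)] by simp
    qed
  qed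
qed

end


context setting begin

lemma Lc_v: "v \<in> V \<Longrightarrow> Sp \<subseteq> B2 E src tgt Q \<Longrightarrow> Lc Sp c (delta (v, [])) = (\<lambda>_. 0)"
  unfolding Lc_def using Dop_vtx by simp

lemma Lc_a:
  assumes a: "a \<in> E" and Sp: "Sp \<subseteq> B2 E src tgt Q"
  shows "Lc Sp c (delta (src a, [a])) p = (if (a, p) \<in> Sp then c (a, p) else 0)"
proof -
  have fin: "finite Sp" using Sp B2_fin by (rule finite_subset)
  have "Lc Sp c (delta (src a, [a])) p = (\<Sum>s\<in>Sp. if s = (a, p) then c (a, p) else 0)"
    unfolding Lc_def
  proof (rule sum.cong)
    fix s assume s: "s \<in> Sp"
    then have "(fst s, snd s) \<in> B2 E src tgt Q" using Sp by auto
    from Dop_arr[OF this a] show "c s * Dv s (delta (src a, [a])) p = (if s = (a, p) then c (a, p) else 0)"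
      by (cases s) (auto simp: delta_def)
  qed simp
  then show ?thesis using fin by simp
qed

lemma indep_main:
  assumes n: "n = card V" and ord: "vs ` {..<n} = V" "inj_on vs {..<n}"
    "\<forall>i\<in>{1..<n}. bs i \<in> E \<and> (\<exists>j<i. (src (bs i) = vs i \<and> tgt (bs i) = vs j) \<or>
        (src (bs i) = vs j \<and> tgt (bs i) = vs i))"
    and Sp: "Sp = B2 E src tgt Q - (\<lambda>a. (a, (src a, [a]))) ` (bs ` {1..<n})"
    and m: "m \<in> PA" and h: "\<forall>x\<in>PA. (\<lambda>p. Lc Sp c x p - adj tgt m x p) \<in> I"
  shows "\<forall>s\<in>Sp. c s = 0"
proof -
  let ?T = "bs ` {1..<n}"
  have SpB: "Sp \<subseteq> B2 E src tgt Q" using Sp by auto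
  have finSp: "finite Sp" using SpB B2_fin by (rule finite_subset)
  have adjmv: "adj tgt m (delta (v, [])) \<in> I" if v: "v \<in> V" for v
  proof -
    have "(\<lambda>p. Lc Sp c (delta (v, [])) p - adj tgt m (delta (v, [])) p) \<in> I" using h vtx_PA[OF v] by blast
    then have "(\<lambda>p. - adj tgt m (delta (v, [])) p) \<in> I" using Lc_v[OF v SpB] by simp
    then show ?thesis by (simp add: I_neg_iff)
  qed
  obtain g where g: "Qfun g" "(\<lambda>p. m p - g p) \<in> I" using Q_span[OF m] by blast
  have mg: "(\<lambda>p. adj tgt m x p - adj tgt g x p) \<in> I" if x: "x \<in> PA" for x
  proof -
    have "adj tgt (\<lambda>p. m p - g p) x = (\<lambda>p. adj tgt m x p - adj tgt g x p)"
      unfolding adj_def by (rule ext) (simp add: pmult_diff_left pmult_diff_right)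
    then show ?thesis using adj_I[OF g(2) x] by simp
  qed
  have adjgv: "adj tgt g (delta (v, [])) \<in> I" if v: "v \<in> V" for v
    using I_diff[OF adjmv[OF v] mg[OF vtx_PA[OF v]]] by simp
  have adjg_eq: "adj tgt g (delta (v, [])) = (\<lambda>p. ((if pend tgt p = v then 1 else 0) - (if fst p = v then 1 else 0)) * g p)" for v
  proof (rule ext)
    fix p :: "('v,'e) qpath"
    obtain u zs where p: "p = (u, zs)" by (cases p)
    show "adj tgt g (delta (v, [])) p = ((if pend tgt p = v then 1 else 0) - (if fst p = v then 1 else 0)) * g p"
      unfolding p adj_def by (simp add: pmult_vtx_left pmult_vtx_right pend_def algebra_simps)
  qed
  have gz: "snd p = []" if nz: "g p \<noteq> 0" for p
  proof -
    have pQ: "p \<in> Q" using g(1) nz by (auto simp: Qfun_def)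
    obtain u zs where p: "p = (u, zs)" by (cases p)
    have "pvalid_aux V E src tgt u zs" using Q_valid[OF pQ] p by (simp add: pvalid_def)
    then have vV: "pend tgt p \<in> V" using p by (simp add: pend_def pvalid_aux_end)
    have "adj tgt g (delta (pend tgt p, [])) p = 0"
      by (rule Q_indep[OF _ adjgv[OF vV]]) (unfold adjg_eq, rule Qfun_mult[OF g(1)])
    then have "fst p = pend tgt p" using nz unfolding adjg_eq by (auto split: if_splits)
    then have "p = (fst p, [])" by (intro cyc_Q pQ) (simp add: pstart_def)
    then show ?thesis by (metis snd_conv)
  qed
  have vanish: "\<forall>p. snd p \<noteq> [] \<longrightarrow> g p = 0" using gz by blast
  define lam where "lam v = g (v, [])" for v
  have adjga: "adj tgt g (delta (src a, [a])) = (\<lambda>p. (lam (src a) - lam (tgt a)) * delta (src a, [a]) p)" for a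
  proof (rule ext)
    fix p :: "('v,'e) qpath"
    obtain u zs where p: "p = (u, zs)" by (cases p)
    show "adj tgt g (delta (src a, [a])) p = (lam (src a) - lam (tgt a)) * delta (src a, [a]) p"
      unfolding p adj_def pmult_vtxlike_left[OF vanish] pmult_vtxlike_right[OF vanish]
      by (auto simp: delta_def lam_def algebra_simps)
  qed
  have H0: "(if (a, p) \<in> Sp then c (a, p) else 0) - (lam (src a) - lam (tgt a)) * delta (src a, [a]) p = 0"
    if a: "a \<in> E" for a p
  proof -
    let ?A = "\<lambda>p. if (a, p) \<in> Sp then c (a, p) else 0"
    let ?H = "\<lambda>p. ?A p - (lam (src a) - lam (tgt a)) * delta (src a, [a]) p"
    have arPA: "delta (src a, [a]) \<in> PA" by (rule arr_PA[OF a])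
    have "(\<lambda>p. (Lc Sp c (delta (src a, [a])) p - adj tgt m (delta (src a, [a])) p) +
             (adj tgt m (delta (src a, [a])) p - adj tgt g (delta (src a, [a])) p)) \<in> I"
      using I_add[OF bspec[OF h arPA] mg[OF arPA]] by simp
    then have HI: "?H \<in> I" by (simp add: Lc_a[OF a SpB] adjga)
    have QA: "Qfun ?A"
    proof -
      have s: "{p. ?A p \<noteq> 0} \<subseteq> snd ` Sp" by (auto simp: image_iff split: if_splits) (metis snd_conv)
      have "snd ` Sp \<subseteq> Q" using SpB by (auto simp: B2_def)
      then show ?thesis unfolding Qfun_def using s finSp by (meson finite_imageI finite_subset subset_trans)
    qed
    have QH: "Qfun ?H"
      by (rule Qfun_diff[OF QA Qfun_mult[OF Qfun_delta[OF arr_Q[OF a]]]])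
    show ?thesis using Q_indep[OF QH HI] by simp
  qed
  have lamT: "lam (src a) = lam (tgt a)" if a: "a \<in> ?T" for a
  proof -
    have aE: "a \<in> E" using a ord(3) by auto
    have "(a, (src a, [a])) \<notin> Sp" using Sp a by auto
    then show ?thesis using H0[OF aE, of "(src a, [a])"] by (simp add: delta_def)
  qed
  have const: "lam (vs i) = lam (vs 0)" if "i < n" for i
    using that
  proof (induction i rule: less_induct)
    case (less i)
    show ?case
    proof (cases "i = 0")
      case False
      then have i: "i \<in> {1..<n}" using less.prems by auto
      then obtain j where j: "j < i" "(src (bs i) = vs i \<and> tgt (bs i) = vs j) \<or> (src (bs i) = vs j \<and> tgt (bs i) = vs i)"
        using ord(3) by blast
      have "lam (src (bs i)) = lam (tgt (bs i))" using lamT i by blast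
      then have "lam (vs i) = lam (vs j)" using j(2) by auto
      also have "\<dots> = lam (vs 0)" using less.IH[OF j(1)] j(1) less.prems by simp
      finally show ?thesis .
    qed simp
  qed
  have constV: "lam v = lam (vs 0)" if "v \<in> V" for v
    using that ord(1) const by auto
  show ?thesis
  proof
    fix s assume s: "s \<in> Sp"
    obtain a q where sq: "s = (a, q)" by (cases s)
    have a: "a \<in> E" using s sq SpB by (auto simp: B2_def)
    have "lam (src a) = lam (tgt a)" using constV ends a by simp
    then show "c s = 0" using H0[OF a, of q] s sq by simp
  qed
qed

lemma main_result:
  "\<exists>n. H1_dim V E src tgt I n \<and> int n = int (card (B2 E src tgt Q)) + 1 - int (card V)"
proof -
  let ?n = "card V"
  obtain vs bs where ord: "vs ` {..<?n} = V" "inj_on vs {..<?n}"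
    "\<forall>i\<in>{1..<?n}. bs i \<in> E \<and> (\<exists>j<i. (src (bs i) = vs i \<and> tgt (bs i) = vs j) \<or>
        (src (bs i) = vs j \<and> tgt (bs i) = vs i))"
    using exists_order[OF finV conn ends] by blast
  have "V \<noteq> {}" using conn unfolding quiver_connected_def by (elim conjE)
  then have ne: "1 \<le> ?n" using finV by (simp add: Suc_leI card_gt_0_iff)
  have bs_ne: "bs i \<noteq> bs i'" if H: "i \<in> {1..<?n}" "i' \<in> {1..<?n}" "i < i'" for i i'
  proof
    assume eq: "bs i = bs i'"
    obtain j where j: "j < i" "(src (bs i) = vs i \<and> tgt (bs i) = vs j) \<or> (src (bs i) = vs j \<and> tgt (bs i) = vs i)"
      using ord(3) H(1) by blast
    obtain j' where j': "j' < i'" "(src (bs i') = vs i' \<and> tgt (bs i') = vs j') \<or> (src (bs i') = vs j' \<and> tgt (bs i') = vs i')"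
      using ord(3) H(2) by blast
    have lt: "i < ?n" "j < ?n" "i' < ?n" using H j by auto
    have n1: "vs i' \<noteq> vs i"
    proof
      assume "vs i' = vs i"
      then have "i' = i" using inj_onD[OF ord(2)] lt by simp
      then show False using H by simp
    qed
    have n2: "vs i' \<noteq> vs j"
    proof
      assume "vs i' = vs j"
      then have "i' = j" using inj_onD[OF ord(2)] lt by simp
      then show False using H j by simp
    qed
    have "src (bs i') = vs i' \<or> tgt (bs i') = vs i'" using j'(2) by blast
    then have "src (bs i) = vs i' \<or> tgt (bs i) = vs i'" using eq by simp
    then show False using j(2) n1 n2 by auto
  qed
  have injb: "inj_on bs {1..<?n}"
  proof (rule inj_onI)
    fix i i' assume "i \<in> {1..<?n}" "i' \<in> {1..<?n}" "bs i = bs i'"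
    then show "i = i'" using bs_ne by (metis linorder_neqE_nat)
  qed
  let ?T = "bs ` {1..<?n}"
  let ?Tp = "(\<lambda>a. (a, (src a, [a]))) ` ?T"
  define Sp where "Sp = B2 E src tgt Q - ?Tp"
  have TE: "?T \<subseteq> E" using ord(3) by auto
  have TpB: "?Tp \<subseteq> B2 E src tgt Q" using TE arrp_B2 by auto
  have cT: "card ?T = ?n - 1" using injb by (simp add: card_image)
  have cTp: "card ?Tp = ?n - 1"
    using cT by (subst card_image) (auto simp: inj_on_def)
  have SpB: "Sp \<subseteq> B2 E src tgt Q" by (auto simp: Sp_def)
  have finSp: "finite Sp" using SpB B2_fin by (rule finite_subset)
  have cSp: "card Sp = card (B2 E src tgt Q) - (?n - 1)"
    unfolding Sp_def using card_Diff_subset[OF finite_subset[OF TpB B2_fin] TpB] cTp by simp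
  have cle: "?n - 1 \<le> card (B2 E src tgt Q)" using card_mono[OF B2_fin TpB] cTp by simp
  have injD: "inj_on Dv (B2 E src tgt Q)"
  proof (rule inj_onI)
    fix s t assume s: "s \<in> B2 E src tgt Q" and t: "t \<in> B2 E src tgt Q" and eq: "Dv s = Dv t"
    have sB: "(fst s, snd s) \<in> B2 E src tgt Q" and tB: "(fst t, snd t) \<in> B2 E src tgt Q" using s t by auto
    have aE: "fst s \<in> E" using s by (auto simp: B2_def)
    have "Dv s (delta (src (fst s), [fst s])) = delta (snd s)" using Dop_arr[OF sB aE] by simp
    moreover have "Dv t (delta (src (fst s), [fst s])) = (if fst s = fst t then delta (snd t) else (\<lambda>_. 0))"
      using Dop_arr[OF tB aE] by simp
    ultimately have e: "(delta (snd s) :: ('v,'e) qpath \<Rightarrow> 'k) = (if fst s = fst t then delta (snd t) else (\<lambda>_. 0))"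
      using eq by simp
    then have "fst s = fst t"
      by (metis (mono_tags) delta_def zero_neq_one)
    moreover have "snd s = snd t"
      using e \<open>fst s = fst t\<close> by (metis delta_def zero_neq_one)
    ultimately show "s = t" by (simp add: prod_eq_iff)
  qed
  have injSp: "inj_on Dv Sp" using injD SpB by (rule inj_on_subset)
  define S where "S = Dv ` Sp"
  have cS: "card S = card Sp" unfolding S_def using injSp by (simp add: card_image)
  have lc_eq: "lincomb c S id = Lc Sp (\<lambda>s. c (Dv s))" for c
    unfolding lincomb_def Lc_def S_def
    by (rule ext, rule ext) (simp add: sum.reindex[OF injSp])
  have gens: "\<forall>s\<in>B2 E src tgt Q. Pc Sp (Dv s)"
    by (rule tree_gens[OF refl ord injb Sp_def])
  have "quot_dim {D. is_diff_op V E src tgt I D} {D. is_inner_op V E src tgt I D} (card S)"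
    unfolding quot_dim_def
  proof (intro exI conjI)
    show "finite S" using finSp by (simp add: S_def)
    show "card S = card S" ..
    show "S \<subseteq> {D. is_diff_op V E src tgt I D}"
      using SpB Dop_diff by (auto simp: S_def)
    show "\<forall>c. lincomb c S id \<in> {D. is_inner_op V E src tgt I D} \<longrightarrow> (\<forall>D\<in>S. c D = 0)"
    proof (intro allI impI)
    fix c assume "lincomb c S id \<in> {D. is_inner_op V E src tgt I D}"
    then obtain m where m: "m \<in> PA" "\<forall>x\<in>PA. (\<lambda>p. lincomb c S id x p - (pmult tgt m x p - pmult tgt x m p)) \<in> I"
      by (auto simp: is_inner_op_def)
    then have h: "\<forall>x\<in>PA. (\<lambda>p. Lc Sp (\<lambda>s. c (Dv s)) x p - adj tgt m x p) \<in> I"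
      by (simp add: lc_eq adj_def)
    have "\<forall>s\<in>Sp. c (Dv s) = 0" by (rule indep_main[OF refl ord Sp_def m(1) h])
    then show "\<forall>D\<in>S. c D = 0" by (auto simp: S_def)
    qed
    show "\<forall>D\<in>{D. is_diff_op V E src tgt I D}. \<exists>c. (\<lambda>x p. D x p - lincomb c S id x p) \<in> {D. is_inner_op V E src tgt I D}"
    proof
    fix D assume "D \<in> {D. is_diff_op V E src tgt I D}"
    then have D: "is_diff_op V E src tgt I D" by simp
    have "Pc Sp D" by (rule span_main[OF D gens])
    then obtain c m where cm: "m \<in> PA" "\<forall>x\<in>PA. (\<lambda>p. D x p - Lc Sp c x p - adj tgt m x p) \<in> I"
      by (auto simp: Pc_def)
    define c' where "c' D' = c (the_inv_into Sp Dv D')" for D'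
    have lc': "lincomb c' S id = Lc Sp c"
      unfolding lc_eq c'_def using the_inv_into_f_f[OF injSp] by (simp add: Lc_def)
    have dmD: "dm V E src tgt I D" and extD: "\<forall>x. x \<notin> PA \<longrightarrow> D x = (\<lambda>_. 0)"
      using D by (simp_all add: is_diff_op_dm)
    have dmL: "dm V E src tgt I (Lc Sp c)" unfolding Lc_def
      by (rule dm_sum[OF finSp]) (use SpB dm_Dv in blast)
    have dmDL: "dm V E src tgt I (\<lambda>x p. D x p - Lc Sp c x p)"
      using dm_lin[OF dmD dmL, of 1 "-1"] by simp
    have "is_inner_op V E src tgt I (\<lambda>x p. D x p - Lc Sp c x p)"
      unfolding is_inner_op_def is_diff_op_dm
    proof (intro conjI allI impI bexI ballI)
      fix x :: "('v,'e) qpath \<Rightarrow> 'k" assume "x \<notin> PA"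
      then show "(\<lambda>p. D x p - Lc Sp c x p) = (\<lambda>_. 0)" using extD by (simp add: Lc_def Dop_def)
    next
      show "dm V E src tgt I (\<lambda>x p. D x p - Lc Sp c x p)" by (rule dmDL)
    next
      fix x :: "('v,'e) qpath \<Rightarrow> 'k" assume "x \<in> PA"
      then show "(\<lambda>p. (D x p - Lc Sp c x p) - (pmult tgt m x p - pmult tgt x m p)) \<in> I"
        using cm(2) by (simp add: adj_def)
    qed (rule cm(1))
    then show "\<exists>c. (\<lambda>x p. D x p - lincomb c S id x p) \<in> {D. is_inner_op V E src tgt I D}"
      using lc' by (intro exI[of _ c']) simp
    qed
  qed
  then have "H1_dim V E src tgt I (card S)" by (simp add: H1_dim_def)
  moreover have "int (card S) = int (card (B2 E src tgt Q)) + 1 - int (card V)"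
    using cS cSp cle ne by simp
  ultimately show ?thesis by blast
qed

end

theorem corollary3p5:
  fixes V :: "'v set" and E :: "'e set" and src tgt :: "'e \<Rightarrow> 'v"
    and I :: "(('v,'e) qpath \<Rightarrow> 'k::field) set" and Q :: "('v,'e) qpath set"
  assumes "finite V" and "finite E"
    and "\<forall>a\<in>E. src a \<in> V \<and> tgt a \<in> V"
    and "quiver_connected V E src tgt"
    and "is_ideal V E src tgt I"
    and "I \<subseteq> arrow_ideal_sq V E src tgt"
    and "path_basis_mod V E src tgt I Q"
    and "\<forall>v\<in>V. \<exists>q\<in>Q. (\<lambda>p. vtx v p - delta q p) \<in> I"
    and "\<forall>a\<in>E. \<exists>q\<in>Q. (\<lambda>p. arr src a p - delta q p) \<in> I"
    and "\<forall>q\<in>Q. pstart q = pend tgt q \<longrightarrow> (\<exists>v\<in>V. (\<lambda>p. delta q p - vtx v p) \<in> I)"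
  shows "\<exists>n. H1_dim V E src tgt I n \<and>
           int n = int (card (B2 E src tgt Q)) + 1 - int (card V)"
proof -
  have "setting V E src tgt I Q"
    unfolding setting_def setting_axioms_def idl_def using assms by blast
  then show ?thesis by (rule setting.main_result)
qed


end
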